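(* Assume the standing conventions of the context. Suppose both $Z$ and $Z'$ are regular and $\mathcal D_{Z,Z'}$ is one-to-one (i.e. $D_Z=\{Z'\}$ and $D_{Z'}=\{Z\}$). Let $\Lambda\in\overline{\mathcal S}_Z$, $\Lambda'\in\overline{\mathcal S}_{Z'}$. (i) If $m'=m+1$, then $(\Lambda,\Lambda')\in\overline{\mathcal B}^+_{Z,Z'}$ if and only if $\Lambda'=\theta^+(\Lambda)$, where $\theta$ is the map on entries defined by $\theta(a_i)=d_i$ ($1\le i\le m+1$), $\theta(b_i)=c_{i+1}$ ($1\le i\le m$), and $\theta^+(\Lambda_M)=\Lambda_{\theta(M)}$ for $M\subset Z_{\mathrm I}$. (ii) If $m'=m$, then $(\Lambda,\Lambda')\in\overline{\mathcal B}^+_{Z,Z'}$ if and only if $\Lambda=\theta^+(\Lambda')$, where $\theta$ is defined by $\theta(c_i)=b_i$, $\theta(d_i)=a_{i+1}$ ($1\le i\le m$), and $\theta^+(\Lambda_N)=\Lambda_{\theta(N)}$ for $N\subset Z'_{\mathrm I}$.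
   Context: A symbol is an array $\Lambda=\binom{a'_1,\ldots,a'_{m_1}}{b'_1,\ldots,b'_{m_2}}$ of two strictly decreasing finite sequences of nonnegative integers (top row, bottom row); its defect is $\mathrm{def}(\Lambda)=m_1-m_2$. Standing assumptions: $Z=\binom{a_1,\ldots,a_{m+1}}{b_1,\ldots,b_m}$ is a special symbol of defect $1$, i.e. $a_1\ge b_1\ge a_2\ge b_2\ge\cdots\ge b_m\ge a_{m+1}$; $Z'=\binom{c_1,\ldots,c_{m'}}{d_1,\ldots,d_{m'}}$ is a special symbol of defect $0$, i.e. $c_1\ge d_1\ge c_2\ge d_2\ge\cdots\ge c_{m'}\ge d_{m'}$; and $m'\in\{m,m+1\}$. For a symbol $Y$, $Y_{\mathrm I}$ is the set of entries of $Y$ occurring in exactly one row; $Y$ is regular if no entry occurs in both rows (then $Y_{\mathrm I}$ is the set of all entries). For $M\subset Z_{\mathrm I}$, $\Lambda_M$ is the symbol obtained from $Z$ by moving every entry of $M$ to the other row (rows re-sorted decreasingly); for $N\subset Z'_{\mathrm I}$, $\Lambda_N$ is obtained from $Z'$ in the same way. $\overline{\mathcal S}_Z=\{\Lambda_M: M\subset Z_{\mathrm I}\}$, $\overline{\mathcal S}_{Z'}=\{\Lambda_N:N\subset Z'_{\mathrm I}\}$; $\mathcal S_{Z,1}$ (resp. $\mathcal S_{Z',0}$) is the set of elements of $\overline{\mathcal S}_Z$ of defect $1$ (resp. of $\overline{\mathcal S}_{Z'}$ of defect $0$). Relation $\overline{\mathcal B}^+_{Z,Z'}\subset\overline{\mathcal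 S}_Z\times\overline{\mathcal S}_{Z'}$: for $\Lambda=\binom{a'_1,\ldots,a'_{m_1}}{b'_1,\ldots,b'_{m_2}}\in\overline{\mathcal S}_Z$ and $\Lambda'=\binom{c'_1,\ldots,c'_{m'_1}}{d'_1,\ldots,d'_{m'_2}}\in\overline{\mathcal S}_{Z'}$, $(\Lambda,\Lambda')\in\overline{\mathcal B}^+_{Z,Z'}$ iff $\mathrm{def}(\Lambda')=1-\mathrm{def}(\Lambda)$ and: if $m'=m$, $a'_i>d'_i\ge a'_{i+1}$ for $1\le i\le m'_2$ and $b'_{i-1}>c'_i\ge b'_i$ for $1\le i\le m'_1$; if $m'=m+1$, $a'_i\ge d'_i>a'_{i+1}$ for $1\le i\le m'_2$ and $b'_{i-1}\ge c'_i>b'_i$ for $1\le i\le m'_1$; here $b'_0=+\infty$ and nonexistent entries $a'_j,b'_j$ beyond the row lengths are $-\infty$. Then $\mathcal D_{Z,Z'}=\overline{\mathcal B}^+_{Z,Z'}\cap(\mathcal S_{Z,1}\times\mathcal S_{Z',0})$, $D_Z=\{\Lambda'\mid (Z,\Lambda')\in\mathcal D_{Z,Z'}\}$ and $D_{Z'}=\{\Lambda\mid(\Lambda,Z')\in\mathcal D_{Z,Z'}\}$. *)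

theory Defs
  imports Main "HOL-Library.Extended_Real"
begin

text \<open>A symbol: two strictly decreasing finite sequences of nonnegative integers,
  represented by the (finite) sets of their entries (top row, bottom row).\<close>
type_synonym symbol = "nat set \<times> nat set"

definition is_symbol :: "symbol \<Rightarrow> bool" where
  "is_symbol S \<longleftrightarrow> finite (fst S) \<and> finite (snd S)"

text \<open>The i-th entry (1-indexed, i-th largest) of a row.\<close>
definition row_entry :: "nat set \<Rightarrow> nat \<Rightarrow> nat" where
  "row_entry X i = rev (sorted_list_of_set X) ! (i - 1)"

definition ext_entry :: "nat set \<Rightarrow> nat \<Rightarrow> ereal" where
  "ext_entry X i = (if 1 \<le> i \<and> i \<le> card X then ereal (real (row_entry X i)) else -\<infinity>)"

definition ext_entry0 :: "nat set \<Rightarrow> nat \<Rightarrow> ereal" where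
  "ext_entry0 X i = (if i = 0 then \<infinity> else ext_entry X i)"

definition defect :: "symbol \<Rightarrow> int" where
  "defect S = int (card (fst S)) - int (card (snd S))"

definition special1 :: "symbol \<Rightarrow> bool" where
  "special1 Z \<longleftrightarrow> is_symbol Z \<and> card (fst Z) = card (snd Z) + 1 \<and>
     (\<forall>i. 1 \<le> i \<and> i \<le> card (snd Z) \<longrightarrow>
        row_entry (fst Z) i \<ge> row_entry (snd Z) i \<and>
        row_entry (snd Z) i \<ge> row_entry (fst Z) (i + 1))"

definition special0 :: "symbol \<Rightarrow> bool" where
  "special0 Z \<longleftrightarrow> is_symbol Z \<and> card (fst Z) = card (snd Z) \<and>
     (\<forall>i. 1 \<le> i \<and> i \<le> card (fst Z) \<longrightarrow> row_entry (fst Z) i \<ge> row_entry (snd Z) i) \<and>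
     (\<forall>i. 1 \<le> i \<and> i < card (fst Z) \<longrightarrow> row_entry (snd Z) i \<ge> row_entry (fst Z) (i + 1))"

definition singles :: "symbol \<Rightarrow> nat set" where
  "singles Z = (fst Z - snd Z) \<union> (snd Z - fst Z)"

definition regular :: "symbol \<Rightarrow> bool" where
  "regular Z \<longleftrightarrow> fst Z \<inter> snd Z = {}"

definition move :: "symbol \<Rightarrow> nat set \<Rightarrow> symbol" where
  "move Z M = ((fst Z - M) \<union> (snd Z \<inter> M), (snd Z - M) \<union> (fst Z \<inter> M))"

definition Sbar :: "symbol \<Rightarrow> symbol set" where
  "Sbar Z = {move Z M | M. M \<subseteq> singles Z}"

definition Sdef :: "symbol \<Rightarrow> int \<Rightarrow> symbol set" where
  "Sdef Z k = {L \<in> Sbar Z. defect L = k}"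

text \<open>The relation B^+_{Z,Z'} (with m = card (snd Z), m' = card (fst Z')).\<close>
definition Bplus :: "symbol \<Rightarrow> symbol \<Rightarrow> (symbol \<times> symbol) set" where
  "Bplus Z Z' = {(L, L'). L \<in> Sbar Z \<and> L' \<in> Sbar Z' \<and> defect L' = 1 - defect L \<and>
     (let a = ext_entry (fst L); b = ext_entry0 (snd L);
          c = ext_entry (fst L'); d = ext_entry (snd L') in
      (card (fst Z') = card (snd Z) \<longrightarrow>
         (\<forall>i. 1 \<le> i \<and> i \<le> card (snd L') \<longrightarrow> a i > d i \<and> d i \<ge> a (i + 1)) \<and>
         (\<forall>i. 1 \<le> i \<and> i \<le> card (fst L') \<longrightarrow> b (i - 1) > c i \<and> c i \<ge> b i)) \<and>
      (card (fst Z') = card (snd Z) + 1 \<longrightarrow>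
         (\<forall>i. 1 \<le> i \<and> i \<le> card (snd L') \<longrightarrow> a i \<ge> d i \<and> d i > a (i + 1)) \<and>
         (\<forall>i. 1 \<le> i \<and> i \<le> card (fst L') \<longrightarrow> b (i - 1) \<ge> c i \<and> c i > b i)))}"

definition Dset :: "symbol \<Rightarrow> symbol \<Rightarrow> (symbol \<times> symbol) set" where
  "Dset Z Z' = Bplus Z Z' \<inter> (Sdef Z 1 \<times> Sdef Z' 0)"

definition D_Z :: "symbol \<Rightarrow> symbol \<Rightarrow> symbol set" where
  "D_Z Z Z' = {L'. (Z, L') \<in> Dset Z Z'}"

definition D_Z' :: "symbol \<Rightarrow> symbol \<Rightarrow> symbol set" where
  "D_Z' Z Z' = {L. (L, Z') \<in> Dset Z Z'}"

definition theta1_img :: "symbol \<Rightarrow> symbol \<Rightarrow> nat set \<Rightarrow> nat set" where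
  "theta1_img Z Z' M =
     {row_entry (snd Z') i | i. 1 \<le> i \<and> i \<le> card (snd Z) + 1 \<and> row_entry (fst Z) i \<in> M} \<union>
     {row_entry (fst Z') (i + 1) | i. 1 \<le> i \<and> i \<le> card (snd Z) \<and> row_entry (snd Z) i \<in> M}"

definition theta2_img :: "symbol \<Rightarrow> symbol \<Rightarrow> nat set \<Rightarrow> nat set" where
  "theta2_img Z Z' N =
     {row_entry (snd Z) i | i. 1 \<le> i \<and> i \<le> card (snd Z) \<and> row_entry (fst Z') i \<in> N} \<union>
     {row_entry (fst Z) (i + 1) | i. 1 \<le> i \<and> i \<le> card (snd Z) \<and> row_entry (snd Z') i \<in> N}"

end

theory Submission
  imports Defs
begin

definition ge :: "nat set \<Rightarrow> nat \<Rightarrow> nat" where "ge X t = card {x\<in>X. t \<le> x}"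
definition gt :: "nat set \<Rightarrow> nat \<Rightarrow> nat" where "gt X t = card {x\<in>X. t < x}"

lemma gt_ge: "gt X t = ge X (Suc t)"
  unfolding gt_def ge_def by (simp add: Suc_le_eq)

lemma re_alt:
  assumes "finite X" "1 \<le> i" "i \<le> card X"
  shows "row_entry X i = sorted_list_of_set X ! (card X - i)"
  using assms by (simp add: row_entry_def rev_nth length_sorted_list_of_set Suc_diff_le)

lemma sl_less:
  assumes "finite X" "i < j" "j < card X"
  shows "sorted_list_of_set X ! i < sorted_list_of_set X ! j"
  using assms sorted_wrt_nth_less[OF sorted_list_of_set.strict_sorted_key_list_of_set[of X], of i j]
  by (simp add: length_sorted_list_of_set)

lemma sl_in:
  assumes "finite X" "j < card X"
  shows "sorted_list_of_set X ! j \<in> X"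
  using assms by (metis length_sorted_list_of_set nth_mem set_sorted_list_of_set)

lemma sl_le_iff:
  assumes "finite X" "i < card X" "j < card X"
  shows "sorted_list_of_set X ! i \<le> sorted_list_of_set X ! j \<longleftrightarrow> i \<le> j"
  using assms sl_less[OF assms(1), of i j] sl_less[OF assms(1), of j i]
  by (metis linorder_not_le nat_neq_iff order_less_imp_le)

lemma re_in:
  assumes "finite X" "1 \<le> i" "i \<le> card X"
  shows "row_entry X i \<in> X"
  using assms re_alt[OF assms] sl_in[OF assms(1), of "card X - i"] by simp

lemma re_less:
  assumes "finite X" "1 \<le> i" "i < j" "j \<le> card X"
  shows "row_entry X j < row_entry X i"
proof -
  have "row_entry X j = sorted_list_of_set X ! (card X - j)" using assms re_alt[of X j] by simp
  moreover have "row_entry X i = sorted_list_of_set X ! (card X - i)" using assms re_alt[of X i] by simp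
  ultimately show ?thesis using assms sl_less[OF assms(1), of "card X - j" "card X - i"] by simp
qed

lemma ge_re:
  assumes "finite X" "1 \<le> i" "i \<le> card X"
  shows "ge X (row_entry X i) = i"
proof -
  let ?xs = "sorted_list_of_set X" let ?n = "card X"
  let ?k = "?n - i"
  have len: "length ?xs = ?n" by (simp add: length_sorted_list_of_set)
  have "{x\<in>X. row_entry X i \<le> x} = (\<lambda>j. ?xs ! j) ` {?k..<?n}"
  proof
    show "{x\<in>X. row_entry X i \<le> x} \<subseteq> (\<lambda>j. ?xs ! j) ` {?k..<?n}"
    proof
      fix x assume "x \<in> {x\<in>X. row_entry X i \<le> x}"
      then have x: "x \<in> X" "row_entry X i \<le> x" by auto
      then obtain j where j: "j < ?n" "x = ?xs ! j"
        using assms(1) by (metis in_set_conv_nth len set_sorted_list_of_set)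
      have "?k \<le> j" using x(2) j assms re_alt[OF assms] sl_le_iff[OF assms(1), of ?k j] by simp
      then show "x \<in> (\<lambda>j. ?xs ! j) ` {?k..<?n}" using j by auto
    qed
  next
    show "(\<lambda>j. ?xs ! j) ` {?k..<?n} \<subseteq> {x\<in>X. row_entry X i \<le> x}"
      using assms re_alt[OF assms] sl_le_iff[OF assms(1)] sl_in[OF assms(1)] by auto
  qed
  moreover have "inj_on (\<lambda>j. ?xs ! j) {?k..<?n}"
    by (rule inj_onI) (metis atLeastLessThan_iff assms(1) le_antisym sl_le_iff order_refl)
  ultimately show ?thesis using assms unfolding ge_def by (simp add: card_image)
qed

lemma ge_re_inv:
  assumes "finite X" "x \<in> X"
  shows "1 \<le> ge X x" "ge X x \<le> card X" "row_entry X (ge X x) = x"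
proof -
  let ?xs = "sorted_list_of_set X" let ?n = "card X"
  obtain j where j: "j < ?n" "x = ?xs ! j"
    using assms by (metis in_set_conv_nth length_sorted_list_of_set set_sorted_list_of_set)
  have r: "row_entry X (?n - j) = x" using j assms re_alt[OF assms(1), of "?n - j"] by simp
  have g: "ge X x = ?n - j" using ge_re[OF assms(1), of "?n - j"] j r by simp
  show "1 \<le> ge X x" "ge X x \<le> card X" "row_entry X (ge X x) = x" using g j r by auto
qed

lemma ge_le_card: "finite X \<Longrightarrow> ge X t \<le> card X"
  unfolding ge_def by (rule card_mono) auto

lemma ge_anti: "finite X \<Longrightarrow> t \<le> s \<Longrightarrow> ge X s \<le> ge X t"
  unfolding ge_def by (rule card_mono) auto

lemma ge_strict:
  assumes "finite X" "y \<in> X" "y < x"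
  shows "ge X x < ge X y"
proof -
  have "{z \<in> X. x \<le> z} \<subseteq> {z \<in> X. y \<le> z} - {y}" using assms by auto
  then have "card {z \<in> X. x \<le> z} \<le> card ({z \<in> X. y \<le> z} - {y})"
    using assms by (intro card_mono) auto
  also have "\<dots> < card {z \<in> X. y \<le> z}" using assms by (intro card_Diff1_less) auto
  finally show ?thesis unfolding ge_def .
qed

lemma ge_K:
  assumes "finite X" "1 \<le> i"
  shows "i \<le> ge X t \<longleftrightarrow> i \<le> card X \<and> t \<le> row_entry X i"
proof
  assume a: "i \<le> ge X t"
  then have ic: "i \<le> card X" using ge_le_card[OF assms(1)] by (meson le_trans)
  moreover have "t \<le> row_entry X i"
  proof (rule ccontr)
    assume "\<not> t \<le> row_entry X i"
    then have "ge X t < ge X (row_entry X i)"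
      using ge_strict[OF assms(1) re_in[OF assms(1,2) ic]] by simp
    then show False using a ge_re[OF assms(1,2) ic] by simp
  qed
  ultimately show "i \<le> card X \<and> t \<le> row_entry X i" by simp
next
  assume "i \<le> card X \<and> t \<le> row_entry X i"
  then show "i \<le> ge X t" using ge_anti[OF assms(1)] ge_re[OF assms] by (metis)
qed

lemma gt_K:
  assumes "finite X" "1 \<le> i"
  shows "i \<le> gt X t \<longleftrightarrow> i \<le> card X \<and> t < row_entry X i"
  using ge_K[OF assms, of "Suc t"] by (simp add: gt_ge Suc_le_eq)

lemma ext_ge:
  assumes "finite X" "1 \<le> i"
  shows "ereal (real t) \<le> ext_entry X i \<longleftrightarrow> i \<le> ge X t"
  using ge_K[OF assms, of t] assms by (simp add: ext_entry_def)

lemma ext_gt: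
  assumes "finite X" "1 \<le> i"
  shows "ereal (real t) < ext_entry X i \<longleftrightarrow> i \<le> gt X t"
  using gt_K[OF assms, of t] assms by (simp add: ext_entry_def)

lemma ext_val:
  "1 \<le> i \<Longrightarrow> i \<le> card X \<Longrightarrow> ext_entry X i = ereal (real (row_entry X i))"
  by (simp add: ext_entry_def)

lemma all_re_iff:
  assumes "finite D"
  shows "(\<forall>i. 1 \<le> i \<and> i \<le> card D \<longrightarrow> P i (row_entry D i)) \<longleftrightarrow> (\<forall>d\<in>D. P (ge D d) d)"
proof
  assume h: "\<forall>i. 1 \<le> i \<and> i \<le> card D \<longrightarrow> P i (row_entry D i)"
  show "\<forall>d\<in>D. P (ge D d) d"
  proof
    fix d assume d: "d \<in> D"
    have "P (ge D d) (row_entry D (ge D d))" using h ge_re_inv[OF assms d] by blast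
    then show "P (ge D d) d" using ge_re_inv(3)[OF assms d] by simp
  qed
next
  assume h: "\<forall>d\<in>D. P (ge D d) d"
  show "\<forall>i. 1 \<le> i \<and> i \<le> card D \<longrightarrow> P i (row_entry D i)"
  proof (intro allI impI)
    fix i assume i: "1 \<le> i \<and> i \<le> card D"
    have "P (ge D (row_entry D i)) (row_entry D i)" using h re_in[OF assms] i by blast
    then show "P i (row_entry D i)" using ge_re[OF assms] i by simp
  qed
qed

lemma cond1_iff:
  assumes "finite A" "finite D"
  shows "(\<forall>i. 1 \<le> i \<and> i \<le> card D \<longrightarrow> ext_entry A i \<ge> ext_entry D i \<and> ext_entry D i > ext_entry A (i+1))
     \<longleftrightarrow> (\<forall>d\<in>D. ge A d = ge D d)"
proof -
  have eq: "(ext_entry A i \<ge> ext_entry D i \<and> ext_entry D i > ext_entry A (i+1)) \<longleftrightarrow> ge A (row_entry D i) = i"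
    if i: "1 \<le> i" "i \<le> card D" for i
  proof -
    have e: "ext_entry D i = ereal (real (row_entry D i))" using ext_val i by blast
    have 1: "ext_entry A i \<ge> ext_entry D i \<longleftrightarrow> i \<le> ge A (row_entry D i)"
      using e ext_ge[OF assms(1) i(1)] by simp
    have 2: "ext_entry D i > ext_entry A (i+1) \<longleftrightarrow> \<not> (i + 1 \<le> ge A (row_entry D i))"
      using e ext_ge[OF assms(1), of "i+1"] by (simp add: not_le[symmetric])
    show ?thesis using 1 2 by linarith
  qed
  have "(\<forall>i. 1 \<le> i \<and> i \<le> card D \<longrightarrow> ext_entry A i \<ge> ext_entry D i \<and> ext_entry D i > ext_entry A (i+1))
     \<longleftrightarrow> (\<forall>i. 1 \<le> i \<and> i \<le> card D \<longrightarrow> ge A (row_entry D i) = i)"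
    using eq by blast
  also have "\<dots> \<longleftrightarrow> (\<forall>d\<in>D. ge A d = ge D d)" by (rule all_re_iff[OF assms(2)])
  finally show ?thesis .
qed

lemma ext0_ge:
  assumes "finite B" "1 \<le> i"
  shows "ereal (real t) \<le> ext_entry0 B (i - 1) \<longleftrightarrow> i - 1 \<le> ge B t"
proof (cases "i = 1")
  case True then show ?thesis by (simp add: ext_entry0_def)
next
  case False then show ?thesis using ext_ge[OF assms(1), of "i - 1" t] assms by (simp add: ext_entry0_def)
qed

lemma ext0_gt:
  assumes "finite B" "1 \<le> i"
  shows "ereal (real t) < ext_entry0 B (i - 1) \<longleftrightarrow> i - 1 \<le> gt B t"
proof (cases "i = 1")
  case True then show ?thesis by (simp add: ext_entry0_def)
next
  case False then show ?thesis using ext_gt[OF assms(1), of "i - 1" t] assms by (simp add: ext_entry0_def)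
qed

lemma cond2_iff:
  assumes "finite B" "finite C"
  shows "(\<forall>i. 1 \<le> i \<and> i \<le> card C \<longrightarrow> ext_entry0 B (i - 1) \<ge> ext_entry C i \<and> ext_entry C i > ext_entry0 B i)
     \<longleftrightarrow> (\<forall>c\<in>C. ge B c + 1 = ge C c)"
proof -
  have eq: "(ext_entry0 B (i - 1) \<ge> ext_entry C i \<and> ext_entry C i > ext_entry0 B i) \<longleftrightarrow> ge B (row_entry C i) + 1 = i"
    if i: "1 \<le> i" "i \<le> card C" for i
  proof -
    have e: "ext_entry C i = ereal (real (row_entry C i))" using ext_val i by blast
    have 1: "ext_entry0 B (i - 1) \<ge> ext_entry C i \<longleftrightarrow> i - 1 \<le> ge B (row_entry C i)"
      using e ext0_ge[OF assms(1) i(1)] by simp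
    have 2: "ext_entry C i > ext_entry0 B i \<longleftrightarrow> \<not> (i \<le> ge B (row_entry C i))"
      using e ext_ge[OF assms(1) i(1)] i by (simp add: not_le[symmetric] ext_entry0_def)
    show ?thesis using 1 2 i by linarith
  qed
  have "(\<forall>i. 1 \<le> i \<and> i \<le> card C \<longrightarrow> ext_entry0 B (i - 1) \<ge> ext_entry C i \<and> ext_entry C i > ext_entry0 B i)
     \<longleftrightarrow> (\<forall>i. 1 \<le> i \<and> i \<le> card C \<longrightarrow> ge B (row_entry C i) + 1 = i)"
    using eq by blast
  also have "\<dots> \<longleftrightarrow> (\<forall>c\<in>C. ge B c + 1 = ge C c)" by (rule all_re_iff[OF assms(2)])
  finally show ?thesis .
qed

lemma cond3_iff:
  assumes "finite A" "finite D"
  shows "(\<forall>i. 1 \<le> i \<and> i \<le> card D \<longrightarrow> ext_entry A i > ext_entry D i \<and> ext_entry D i \<ge> ext_entry A (i+1))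
     \<longleftrightarrow> (\<forall>d\<in>D. gt A d = ge D d)"
proof -
  have eq: "(ext_entry A i > ext_entry D i \<and> ext_entry D i \<ge> ext_entry A (i+1)) \<longleftrightarrow> gt A (row_entry D i) = i"
    if i: "1 \<le> i" "i \<le> card D" for i
  proof -
    have e: "ext_entry D i = ereal (real (row_entry D i))" using ext_val i by blast
    have 1: "ext_entry A i > ext_entry D i \<longleftrightarrow> i \<le> gt A (row_entry D i)"
      using e ext_gt[OF assms(1) i(1)] by simp
    have 2: "ext_entry D i \<ge> ext_entry A (i+1) \<longleftrightarrow> \<not> (i + 1 \<le> gt A (row_entry D i))"
      using e ext_gt[OF assms(1), of "i+1"] by (simp add: not_less[symmetric])
    show ?thesis using 1 2 by linarith
  qed
  have "(\<forall>i. 1 \<le> i \<and> i \<le> card D \<longrightarrow> ext_entry A i > ext_entry D i \<and> ext_entry D i \<ge> ext_entry A (i+1))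
     \<longleftrightarrow> (\<forall>i. 1 \<le> i \<and> i \<le> card D \<longrightarrow> gt A (row_entry D i) = i)"
    using eq by blast
  also have "\<dots> \<longleftrightarrow> (\<forall>d\<in>D. gt A d = ge D d)" by (rule all_re_iff[OF assms(2)])
  finally show ?thesis .
qed

lemma cond4_iff:
  assumes "finite B" "finite C"
  shows "(\<forall>i. 1 \<le> i \<and> i \<le> card C \<longrightarrow> ext_entry0 B (i - 1) > ext_entry C i \<and> ext_entry C i \<ge> ext_entry0 B i)
     \<longleftrightarrow> (\<forall>c\<in>C. gt B c + 1 = ge C c)"
proof -
  have eq: "(ext_entry0 B (i - 1) > ext_entry C i \<and> ext_entry C i \<ge> ext_entry0 B i) \<longleftrightarrow> gt B (row_entry C i) + 1 = i"
    if i: "1 \<le> i" "i \<le> card C" for i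
  proof -
    have e: "ext_entry C i = ereal (real (row_entry C i))" using ext_val i by blast
    have 1: "ext_entry0 B (i - 1) > ext_entry C i \<longleftrightarrow> i - 1 \<le> gt B (row_entry C i)"
      using e ext0_gt[OF assms(1) i(1)] by simp
    have 2: "ext_entry C i \<ge> ext_entry0 B i \<longleftrightarrow> \<not> (i \<le> gt B (row_entry C i))"
      using e ext_gt[OF assms(1) i(1)] i by (simp add: not_less[symmetric] ext_entry0_def)
    show ?thesis using 1 2 i by linarith
  qed
  have "(\<forall>i. 1 \<le> i \<and> i \<le> card C \<longrightarrow> ext_entry0 B (i - 1) > ext_entry C i \<and> ext_entry C i \<ge> ext_entry0 B i)
     \<longleftrightarrow> (\<forall>i. 1 \<le> i \<and> i \<le> card C \<longrightarrow> gt B (row_entry C i) + 1 = i)"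
    using eq by blast
  also have "\<dots> \<longleftrightarrow> (\<forall>c\<in>C. gt B c + 1 = ge C c)" by (rule all_re_iff[OF assms(2)])
  finally show ?thesis .
qed

lemma Bplus_iff:
  assumes "finite (fst L)" "finite (snd L)" "finite (fst L')" "finite (snd L')"
  shows "(L, L') \<in> Bplus Z Z' \<longleftrightarrow> L \<in> Sbar Z \<and> L' \<in> Sbar Z' \<and> defect L' = 1 - defect L \<and>
    (card (fst Z') = card (snd Z) \<longrightarrow>
       (\<forall>d\<in>snd L'. gt (fst L) d = ge (snd L') d) \<and> (\<forall>c\<in>fst L'. gt (snd L) c + 1 = ge (fst L') c)) \<and>
    (card (fst Z') = card (snd Z) + 1 \<longrightarrow>
       (\<forall>d\<in>snd L'. ge (fst L) d = ge (snd L') d) \<and> (\<forall>c\<in>fst L'. ge (snd L) c + 1 = ge (fst L') c))"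
  unfolding Bplus_def Let_def mem_Collect_eq prod.case
  unfolding cond1_iff[OF assms(1,4)] cond2_iff[OF assms(2,3)] cond3_iff[OF assms(1,4)] cond4_iff[OF assms(2,3)]
  by blast

lemma move_empty: "move Z {} = Z"
  by (simp add: move_def)

lemma singles_reg: "regular Z \<Longrightarrow> singles Z = fst Z \<union> snd Z"
  by (auto simp: singles_def regular_def)

lemma move_in_Sbar: "M \<subseteq> singles Z \<Longrightarrow> move Z M \<in> Sbar Z"
  by (auto simp: Sbar_def)

lemma Sbar_self: "Z \<in> Sbar Z"
  using move_in_Sbar[of "{}" Z] by (simp add: move_empty)

lemma move_union: "fst (move Z M) \<union> snd (move Z M) = fst Z \<union> snd Z"
  by (auto simp: move_def)

lemma move_disj: "regular Z \<Longrightarrow> fst (move Z M) \<inter> snd (move Z M) = {}"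
  by (auto simp: move_def regular_def)

lemma move_fin: "is_symbol Z \<Longrightarrow> finite (fst (move Z M)) \<and> finite (snd (move Z M))"
  by (auto simp: move_def is_symbol_def)

lemma move_swap:
  assumes "regular Z" "x \<in> fst Z" "y \<in> snd Z"
  shows "move Z {x, y} = (insert y (fst Z - {x}), insert x (snd Z - {y}))"
  using assms by (auto simp: move_def regular_def)

lemma ge_swap:
  assumes "finite X" "y \<in> X" "x \<notin> X"
  shows "ge (insert x (X - {y})) t + (if t \<le> y then 1 else 0) = ge X t + (if t \<le> x then 1 else 0)"
proof -
  let ?S = "{z\<in>X. t \<le> z}"
  have fS: "finite ?S" using assms by auto
  have c1: "card (?S - {y}) + (if t \<le> y then 1 else 0) = card ?S"
  proof (cases "t \<le> y")
    case True
    then have "y \<in> ?S" using assms by auto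
    then have "card ?S > 0" using fS card_gt_0_iff by blast
    then show ?thesis using True \<open>y \<in> ?S\<close> fS by (simp add: card_Diff_singleton)
  next
    case False then show ?thesis by simp
  qed
  show ?thesis
  proof (cases "t \<le> x")
    case True
    have "{z \<in> insert x (X - {y}). t \<le> z} = insert x (?S - {y})" using True by auto
    moreover have "card (insert x (?S - {y})) = card (?S - {y}) + 1" using assms fS by simp
    ultimately show ?thesis using c1 True unfolding ge_def by simp
  next
    case False
    have "{z \<in> insert x (X - {y}). t \<le> z} = ?S - {y}" using False by auto
    then show ?thesis using c1 False unfolding ge_def by simp
  qed
qed

lemma gt_swap:
  assumes "finite X" "y \<in> X" "x \<notin> X"
  shows "gt (insert x (X - {y})) t + (if t < y then 1 else 0) = gt X t + (if t < x then 1 else 0)"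
  using ge_swap[OF assms, of "Suc t"] by (simp add: gt_ge Suc_le_eq)

lemma ge_eqI:
  assumes "finite X" "j = 0 \<or> (j \<le> card X \<and> t \<le> row_entry X j)"
    "j + 1 \<le> card X \<longrightarrow> row_entry X (j+1) < t"
  shows "ge X t = j"
proof -
  have "j \<le> ge X t" using assms(2) ge_K[OF assms(1), of j t] by (cases "j = 0") auto
  moreover have "\<not> j + 1 \<le> ge X t" using assms(3) ge_K[OF assms(1), of "j+1" t] by auto
  ultimately show ?thesis by simp
qed

lemma gt_eqI:
  assumes "finite X" "j = 0 \<or> (j \<le> card X \<and> t < row_entry X j)"
    "j + 1 \<le> card X \<longrightarrow> row_entry X (j+1) \<le> t"
  shows "gt X t = j"
proof -
  have "j \<le> gt X t" using assms(2) gt_K[OF assms(1), of j t] by (cases "j = 0") auto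
  moreover have "\<not> j + 1 \<le> gt X t" using assms(3) gt_K[OF assms(1), of "j+1" t] by auto
  ultimately show ?thesis by simp
qed

lemma re_mono:
  assumes "finite X" "1 \<le> i" "i \<le> j" "j \<le> card X"
  shows "row_entry X j \<le> row_entry X i"
  using re_less[OF assms(1,2), of j] assms by (cases "i = j") auto

lemma rank_inj:
  assumes "finite X" "x \<in> X" "y \<in> X" "ge X x = ge X y"
  shows "x = y"
  using ge_re_inv(3)[OF assms(1,2)] ge_re_inv(3)[OF assms(1,3)] assms(4) by metis

lemma rank_ge_iff:
  assumes "finite X" "x \<in> X"
  shows "t \<le> x \<longleftrightarrow> ge X x \<le> ge X t"
proof
  assume "t \<le> x" then show "ge X x \<le> ge X t" using ge_anti[OF assms(1)] by blast
next
  assume h: "ge X x \<le> ge X t"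
  show "t \<le> x"
  proof (rule ccontr)
    assume "\<not> t \<le> x"
    then have "ge X t < ge X x" using ge_strict[OF assms] by simp
    then show False using h by simp
  qed
qed

lemma rank_gt_iff:
  assumes "finite X" "x \<in> X"
  shows "t < x \<longleftrightarrow> ge X x \<le> gt X t"
  using rank_ge_iff[OF assms, of "Suc t"] by (simp add: gt_ge Suc_le_eq)

lemma gt_notin: "t \<notin> X \<Longrightarrow> gt X t = ge X t"
  unfolding gt_def ge_def by (rule arg_cong[where f=card]) (auto simp: order_le_less)

lemma ge_gt_in: "finite X \<Longrightarrow> t \<in> X \<Longrightarrow> ge X t = gt X t + 1"
proof -
  assume f: "finite X" and t: "t \<in> X"
  have "{x\<in>X. t \<le> x} = insert t {x\<in>X. t < x}" using t by auto
  then show ?thesis using f unfolding ge_def gt_def by simp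
qed

lemma ge_Un: "finite X \<Longrightarrow> finite Y \<Longrightarrow> X \<inter> Y = {} \<Longrightarrow> ge (X \<union> Y) t = ge X t + ge Y t"
  unfolding ge_def by (subst card_Un_disjoint[symmetric]) (auto intro: arg_cong[where f=card])

lemma gt_Un: "finite X \<Longrightarrow> finite Y \<Longrightarrow> X \<inter> Y = {} \<Longrightarrow> gt (X \<union> Y) t = gt X t + gt Y t"
  unfolding gt_ge by (rule ge_Un)

locale sett =
  fixes Z Z' :: symbol
  assumes sp1: "special1 Z" and sp0: "special0 Z'" and rZ: "regular Z" and rZ': "regular Z'"
begin

abbreviation "A0 \<equiv> fst Z"
abbreviation "B0 \<equiv> snd Z"
abbreviation "C0 \<equiv> fst Z'"
abbreviation "D0 \<equiv> snd Z'"
abbreviation "m \<equiv> card B0"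
abbreviation "m' \<equiv> card C0"
abbreviation "U \<equiv> A0 \<union> B0"
abbreviation "W \<equiv> C0 \<union> D0"
abbreviation "a \<equiv> row_entry A0"
abbreviation "b \<equiv> row_entry B0"
abbreviation "c \<equiv> row_entry C0"
abbreviation "d \<equiv> row_entry D0"

lemma fA: "finite A0" and fB: "finite B0" and cA: "card A0 = m + 1"
  using sp1 by (auto simp: special1_def is_symbol_def)

lemma fC: "finite C0" and fD: "finite D0" and cD: "card D0 = m'"
  using sp0 by (auto simp: special0_def is_symbol_def)

lemma fU: "finite U" and fW: "finite W" using fA fB fC fD by auto

lemma dAB: "A0 \<inter> B0 = {}" using rZ by (simp add: regular_def)
lemma dCD: "C0 \<inter> D0 = {}" using rZ' by (simp add: regular_def)

lemma ba: "1 \<le> i \<Longrightarrow> i \<le> m \<Longrightarrow> b i < a i"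
proof -
  assume i: "1 \<le> i" "i \<le> m"
  have "b i \<le> a i" using sp1 i by (simp add: special1_def)
  moreover have "b i \<in> B0" using re_in[OF fB] i by simp
  moreover have "a i \<in> A0" using re_in[OF fA] i cA by simp
  ultimately show ?thesis using dAB by (metis disjoint_iff order_le_less)
qed

lemma ab: "1 \<le> i \<Longrightarrow> i \<le> m \<Longrightarrow> a (i+1) < b i"
proof -
  assume i: "1 \<le> i" "i \<le> m"
  have "a (i+1) \<le> b i" using sp1 i by (simp add: special1_def)
  moreover have "b i \<in> B0" using re_in[OF fB] i by simp
  moreover have "a (i+1) \<in> A0" using re_in[OF fA, of "i+1"] i cA by simp
  ultimately show ?thesis using dAB by (metis disjoint_iff order_le_less)
qed

lemma dc: "1 \<le> i \<Longrightarrow> i \<le> m' \<Longrightarrow> d i < c i"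
proof -
  assume i: "1 \<le> i" "i \<le> m'"
  have "d i \<le> c i" using sp0 i by (simp add: special0_def)
  moreover have "c i \<in> C0" using re_in[OF fC] i by simp
  moreover have "d i \<in> D0" using re_in[OF fD] i cD by simp
  ultimately show ?thesis using dCD by (metis disjoint_iff order_le_less)
qed

lemma cd: "1 \<le> i \<Longrightarrow> i < m' \<Longrightarrow> c (i+1) < d i"
proof -
  assume i: "1 \<le> i" "i < m'"
  have "c (i+1) \<le> d i" using sp0 i by (simp add: special0_def)
  moreover have "c (i+1) \<in> C0" using re_in[OF fC, of "i+1"] i by simp
  moreover have "d i \<in> D0" using re_in[OF fD] i cD by simp
  ultimately show ?thesis using dCD by (metis disjoint_iff order_le_less)
qed

lemma a_in: "1 \<le> i \<Longrightarrow> i \<le> m + 1 \<Longrightarrow> a i \<in> A0" using re_in[OF fA] cA by simp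
lemma b_in: "1 \<le> i \<Longrightarrow> i \<le> m \<Longrightarrow> b i \<in> B0" using re_in[OF fB] by simp
lemma c_in: "1 \<le> i \<Longrightarrow> i \<le> m' \<Longrightarrow> c i \<in> C0" using re_in[OF fC] by simp
lemma d_in: "1 \<le> i \<Longrightarrow> i \<le> m' \<Longrightarrow> d i \<in> D0" using re_in[OF fD] cD by simp

lemma geAa: "1 \<le> i \<Longrightarrow> i \<le> m + 1 \<Longrightarrow> ge A0 (a i) = i" using ge_re[OF fA] cA by simp
lemma geBb: "1 \<le> i \<Longrightarrow> i \<le> m \<Longrightarrow> ge B0 (b i) = i" using ge_re[OF fB] by simp
lemma geCc: "1 \<le> i \<Longrightarrow> i \<le> m' \<Longrightarrow> ge C0 (c i) = i" using ge_re[OF fC] by simp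
lemma geDd: "1 \<le> i \<Longrightarrow> i \<le> m' \<Longrightarrow> ge D0 (d i) = i" using ge_re[OF fD] cD by simp

lemma geBa: "1 \<le> i \<Longrightarrow> i \<le> m + 1 \<Longrightarrow> ge B0 (a i) = i - 1"
proof -
  assume i: "1 \<le> i" "i \<le> m + 1"
  show ?thesis
  proof (rule ge_eqI[OF fB])
    have "i \<noteq> 1 \<Longrightarrow> a i < b (i - 1)" using ab[of "i - 1"] i by simp
    then show "i - 1 = 0 \<or> (i - 1 \<le> m \<and> a i \<le> b (i - 1))"
      using i by (cases "i = 1") auto
    show "i - 1 + 1 \<le> m \<longrightarrow> b (i - 1 + 1) < a i" using ba[of i] i by simp
  qed
qed

lemma geAb: "1 \<le> i \<Longrightarrow> i \<le> m \<Longrightarrow> ge A0 (b i) = i"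
proof -
  assume i: "1 \<le> i" "i \<le> m"
  show ?thesis
  proof (rule ge_eqI[OF fA])
    show "i = 0 \<or> (i \<le> card A0 \<and> b i \<le> a i)" using ba[of i] i cA by simp
    show "i + 1 \<le> card A0 \<longrightarrow> a (i + 1) < b i" using ab[of i] i by simp
  qed
qed

lemma geDc: "1 \<le> i \<Longrightarrow> i \<le> m' \<Longrightarrow> ge D0 (c i) = i - 1"
proof -
  assume i: "1 \<le> i" "i \<le> m'"
  show ?thesis
  proof (rule ge_eqI[OF fD])
    have "i \<noteq> 1 \<Longrightarrow> c i < d (i - 1)" using cd[of "i - 1"] i by simp
    then show "i - 1 = 0 \<or> (i - 1 \<le> card D0 \<and> c i \<le> d (i - 1))"
      using i cD by (cases "i = 1") auto
    show "i - 1 + 1 \<le> card D0 \<longrightarrow> d (i - 1 + 1) < c i" using dc[of i] i cD by simp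
  qed
qed

lemma geCd: "1 \<le> i \<Longrightarrow> i \<le> m' \<Longrightarrow> ge C0 (d i) = i"
proof -
  assume i: "1 \<le> i" "i \<le> m'"
  show ?thesis
  proof (rule ge_eqI[OF fC])
    show "i = 0 \<or> (i \<le> m' \<and> d i \<le> c i)" using dc[of i] i by simp
    show "i + 1 \<le> m' \<longrightarrow> c (i + 1) < d i" using cd[of i] i by simp
  qed
qed

lemma geUa: "1 \<le> i \<Longrightarrow> i \<le> m + 1 \<Longrightarrow> ge U (a i) = 2 * i - 1"
  using ge_Un[OF fA fB dAB] geAa geBa by simp
lemma geUb: "1 \<le> i \<Longrightarrow> i \<le> m \<Longrightarrow> ge U (b i) = 2 * i"
  using ge_Un[OF fA fB dAB] geAb geBb by simp
lemma geWc: "1 \<le> i \<Longrightarrow> i \<le> m' \<Longrightarrow> ge W (c i) = 2 * i - 1"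
  using ge_Un[OF fC fD dCD] geCc geDc by simp
lemma geWd: "1 \<le> i \<Longrightarrow> i \<le> m' \<Longrightarrow> ge W (d i) = 2 * i"
  using ge_Un[OF fC fD dCD] geCd geDd by simp

lemma cardU: "card U = 2 * m + 1" using card_Un_disjoint[OF fA fB dAB] cA by simp
lemma cardW: "card W = 2 * m'" using card_Un_disjoint[OF fC fD dCD] cD by simp

lemma adjacent:
  assumes "p \<in> W" "q \<in> W" "ge W q = ge W p + 1" "w \<in> W" "w \<noteq> p" "w \<noteq> q"
  shows "w \<le> p \<longleftrightarrow> w \<le> q"
proof -
  have qp: "q < p"
  proof (rule ccontr)
    assume "\<not> q < p" then have "ge W q \<le> ge W p" using ge_anti[OF fW] by simp
    then show False using assms(3) by simp
  qed
  show ?thesis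
  proof
    assume wp: "w \<le> p"
    show "w \<le> q"
    proof (rule ccontr)
      assume "\<not> w \<le> q"
      then have "ge W w < ge W q" using ge_strict[OF fW assms(2)] by simp
      moreover have "ge W p \<le> ge W w" using ge_anti[OF fW wp] .
      ultimately have "ge W w = ge W p" using assms(3) by simp
      then show False using rank_inj[OF fW assms(4) assms(1)] assms(5) by simp
    qed
  next
    assume "w \<le> q" then show "w \<le> p" using qp by simp
  qed
qed

lemma adjacentU:
  assumes "p \<in> U" "q \<in> U" "ge U q = ge U p + 1" "w \<in> U" "w \<noteq> p" "w \<noteq> q"
  shows "w \<le> p \<longleftrightarrow> w \<le> q"
proof -
  have qp: "q < p"
  proof (rule ccontr)
    assume "\<not> q < p" then have "ge U q \<le> ge U p" using ge_anti[OF fU] by simp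
    then show False using assms(3) by simp
  qed
  show ?thesis
  proof
    assume wp: "w \<le> p"
    show "w \<le> q"
    proof (rule ccontr)
      assume "\<not> w \<le> q"
      then have "ge U w < ge U q" using ge_strict[OF fU assms(2)] by simp
      moreover have "ge U p \<le> ge U w" using ge_anti[OF fU wp] .
      ultimately have "ge U w = ge U p" using assms(3) by simp
      then show False using rank_inj[OF fU assms(4) assms(1)] assms(5) by simp
    qed
  next
    assume "w \<le> q" then show "w \<le> p" using qp by simp
  qed
qed

lemma isZ: "is_symbol Z" using sp1 by (simp add: special1_def)
lemma isZ': "is_symbol Z'" using sp0 by (simp add: special0_def)

lemma defZ: "defect Z = 1" using cA by (simp add: defect_def)
lemma defZ': "defect Z' = 0" using cD by (simp add: defect_def)

lemma Z_Sdef: "Z \<in> Sdef Z 1" using Sbar_self defZ by (simp add: Sdef_def)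
lemma Z'_Sdef: "Z' \<in> Sdef Z' 0" using Sbar_self defZ' by (simp add: Sdef_def)

lemma swap1_false:
  assumes card: "m' = m + 1" and DZ: "D_Z Z Z' = {Z'}"
  and F1: "\<forall>w\<in>D0. ge A0 w = ge D0 w" and F2: "\<forall>w\<in>C0. ge B0 w + 1 = ge C0 w"
  and x: "x \<in> C0" and y: "y \<in> D0" and adj: "\<forall>w\<in>W - {x,y}. (w \<le> x \<longleftrightarrow> w \<le> y)"
  and cx: "ge A0 x + (if x \<le> y then 1 else 0) = ge D0 x + 1"
  and cy: "ge B0 y + 1 + (if y \<le> x then 1 else 0) = ge C0 y + 1"
  shows False
proof -
  define L' where "L' = move Z' {x, y}"
  have L'eq: "L' = (insert y (C0 - {x}), insert x (D0 - {y}))"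
    unfolding L'_def using move_swap[OF rZ' x y] .
  have xD: "x \<notin> D0" and yC: "y \<notin> C0" using x y dCD by auto
  have fL1: "finite (fst L')" and fL2: "finite (snd L')" using L'eq fC fD by auto
  have "card C0 > 0" using fC x card_gt_0_iff by blast
  then have cardC': "card (fst L') = card C0" using L'eq fC x yC by (simp add: card_Diff_singleton)
  have "card D0 > 0" using fD y card_gt_0_iff by blast
  then have cardD': "card (snd L') = card D0" using L'eq fD y xD by (simp add: card_Diff_singleton)
  have SL': "L' \<in> Sbar Z'" unfolding L'_def using x y singles_reg[OF rZ'] by (intro move_in_Sbar) auto
  have defL': "defect L' = 0" using cardC' cardD' cD by (simp add: defect_def)
  have P1: "\<forall>w\<in>snd L'. ge A0 w = ge (snd L') w"
  proof
    fix w assume w: "w \<in> snd L'"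
    have sw: "ge (snd L') w + (if w \<le> y then 1 else 0) = ge D0 w + (if w \<le> x then 1 else 0)"
      using ge_swap[OF fD y xD, of w] L'eq by simp
    show "ge A0 w = ge (snd L') w"
    proof (cases "w = x")
      case True then show ?thesis using sw cx by simp
    next
      case False
      then have wD: "w \<in> D0" "w \<noteq> y" using w L'eq by auto
      then have "w \<le> x \<longleftrightarrow> w \<le> y" using adj xD by auto
      then show ?thesis using sw F1 wD by (auto split: if_splits)
    qed
  qed
  have P2: "\<forall>w\<in>fst L'. ge B0 w + 1 = ge (fst L') w"
  proof
    fix w assume w: "w \<in> fst L'"
    have sw: "ge (fst L') w + (if w \<le> x then 1 else 0) = ge C0 w + (if w \<le> y then 1 else 0)"
      using ge_swap[OF fC x yC, of w] L'eq by simp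
    show "ge B0 w + 1 = ge (fst L') w"
    proof (cases "w = y")
      case True then show ?thesis using sw cy by simp
    next
      case False
      then have wC: "w \<in> C0" "w \<noteq> x" using w L'eq by auto
      then have "w \<le> x \<longleftrightarrow> w \<le> y" using adj yC by auto
      then show ?thesis using sw F2 wC by (auto split: if_splits)
    qed
  qed
  have fZ1: "finite (fst Z)" and fZ2: "finite (snd Z)" using fA fB by auto
  have "(Z, L') \<in> Bplus Z Z'"
    using Bplus_iff[OF fZ1 fZ2 fL1 fL2, of Z Z'] Sbar_self SL' defL' defZ card P1 P2 by simp
  then have "(Z, L') \<in> Dset Z Z'" using Z_Sdef SL' defL' by (simp add: Dset_def Sdef_def)
  then have "L' \<in> D_Z Z Z'" by (simp add: D_Z_def)
  then have "L' = Z'" using DZ by simp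
  then have "y \<in> C0" using L'eq by (metis fst_conv insertI1)
  then show False using yC by simp
qed

lemma BZZ'_of_DZ: "D_Z Z Z' = {Z'} \<Longrightarrow> (Z, Z') \<in> Bplus Z Z'"
  by (auto simp: D_Z_def Dset_def)

lemma BZZ'_of_DZ': "D_Z' Z Z' = {Z} \<Longrightarrow> (Z, Z') \<in> Bplus Z Z'"
  by (auto simp: D_Z'_def Dset_def)

lemma order1:
  assumes card: "m' = m + 1" and DZ: "D_Z Z Z' = {Z'}"
  shows "\<forall>w\<in>W. ge U w + 1 = ge W w"
proof -
  have "(Z, Z') \<in> Bplus Z Z'" using BZZ'_of_DZ[OF DZ] .
  then have F1: "\<forall>w\<in>D0. ge A0 w = ge D0 w" and F2: "\<forall>w\<in>C0. ge B0 w + 1 = ge C0 w"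
    using Bplus_iff[of Z Z' Z Z'] fA fB fC fD card by auto
  have e1: "ge A0 (d i) = i" if "1 \<le> i" "i \<le> m + 1" for i
    using F1 d_in[of i] geDd[of i] that card by simp
  have e2: "ge B0 (c i) + 1 = i" if "1 \<le> i" "i \<le> m + 1" for i
    using F2 c_in[of i] geCc[of i] that card by simp
  have bc1: "ge A0 (c i) \<le> i" if i: "1 \<le> i" "i \<le> m + 1" for i
    using ge_anti[OF fA, of "d i" "c i"] dc[of i] i card e1[OF i] by simp
  have bc2: "i \<le> ge A0 (c i) + 1" if i: "1 \<le> i" "i \<le> m + 1" for i
  proof (cases "i = 1")
    case True then show ?thesis by simp
  next
    case False
    have "i - 1 \<le> ge B0 (c i)" using e2[OF i] by simp
    then have "c i \<le> b (i - 1)" using ge_K[OF fB, of "i - 1" "c i"] False i by simp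
    moreover have "b (i - 1) < a (i - 1)" using ba[of "i - 1"] False i by simp
    ultimately have "i - 1 \<le> ge A0 (c i)" using ge_K[OF fA, of "i - 1" "c i"] False i cA by simp
    then show ?thesis by simp
  qed
  have bd1: "i \<le> ge B0 (d i) + 1" if i: "1 \<le> i" "i \<le> m + 1" for i
    using ge_anti[OF fB, of "d i" "c i"] dc[of i] i card e2[OF i] by simp
  have bd2: "ge B0 (d i) \<le> i" if i: "1 \<le> i" "i \<le> m + 1" for i
  proof (rule ccontr)
    assume "\<not> ge B0 (d i) \<le> i"
    then have "i + 1 \<le> ge B0 (d i)" by simp
    then have h: "i + 1 \<le> m" "d i \<le> b (i + 1)" using ge_K[OF fB, of "i+1" "d i"] by auto
    then have "d i \<le> a (i + 1)" using ba[of "i+1"] by simp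
    then have "i + 1 \<le> ge A0 (d i)" using ge_K[OF fA, of "i + 1" "d i"] h cA by simp
    then show False using e1[OF i] by simp
  qed
  have bd3: "ge B0 (d (m+1)) = m"
    using bd1[of "m+1"] ge_le_card[OF fB, of "d (m+1)"] by simp
  have sw1: "\<not> (ge A0 (c i) = i \<and> ge B0 (d i) + 1 = i)" if i: "1 \<le> i" "i \<le> m + 1" for i
  proof
    assume h: "ge A0 (c i) = i \<and> ge B0 (d i) + 1 = i"
    have x: "c i \<in> C0" and y: "d i \<in> D0" using c_in d_in i card by auto
    have lt: "d i < c i" using dc i card by simp
    have adj: "\<forall>w\<in>W - {c i, d i}. (w \<le> c i \<longleftrightarrow> w \<le> d i)"
      using adjacent[of "c i" "d i"] x y geWc[of i] geWd[of i] i card by auto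
    show False
    proof (rule swap1_false[OF card DZ F1 F2 x y adj])
      show "ge A0 (c i) + (if c i \<le> d i then 1 else 0) = ge D0 (c i) + 1"
        using h lt geDc[of i] i card by simp
      show "ge B0 (d i) + 1 + (if d i \<le> c i then 1 else 0) = ge C0 (d i) + 1"
        using h lt geCd[of i] i card by simp
    qed
  qed
  have sw2: "\<not> (ge A0 (c (i+1)) = i \<and> ge B0 (d i) = i)" if i: "1 \<le> i" "i \<le> m" for i
  proof
    assume h: "ge A0 (c (i+1)) = i \<and> ge B0 (d i) = i"
    have x: "c (i+1) \<in> C0" and y: "d i \<in> D0" using c_in d_in i card by auto
    have lt: "c (i+1) < d i" using cd[of i] i card by simp
    have adj: "\<forall>w\<in>W - {c (i+1), d i}. (w \<le> c (i+1) \<longleftrightarrow> w \<le> d i)"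
      using adjacent[of "d i" "c (i+1)"] x y geWc[of "i+1"] geWd[of i] i card by auto
    show False
    proof (rule swap1_false[OF card DZ F1 F2 x y adj])
      show "ge A0 (c (i+1)) + (if c (i+1) \<le> d i then 1 else 0) = ge D0 (c (i+1)) + 1"
        using h lt geDc[of "i+1"] i card by simp
      show "ge B0 (d i) + 1 + (if d i \<le> c (i+1) then 1 else 0) = ge C0 (d i) + 1"
        using h lt geCd[of i] i card by simp
    qed
  qed
  have H: "1 \<le> i \<longrightarrow> ge B0 (d i) + 1 = i" if i: "i \<le> m + 1" for i
    using i
  proof (induction i rule: inc_induct)
    case base then show ?case using bd3 by simp
  next
    case (step n)
    show ?case
    proof
      assume n1: "1 \<le> n"
      have "ge B0 (d (Suc n)) + 1 = Suc n" using step by simp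
      then have "ge A0 (c (Suc n)) = n"
        using sw1[of "Suc n"] bc1[of "Suc n"] bc2[of "Suc n"] step by fastforce
      then show "ge B0 (d n) + 1 = n"
        using sw2[of n] bd1[of n] bd2[of n] step n1 by fastforce
    qed
  qed
  have G: "ge A0 (c i) + 1 = i" if i: "1 \<le> i" "i \<le> m + 1" for i
    using sw1[OF i] bc1[OF i] bc2[OF i] H[of i] i by fastforce
  show ?thesis
  proof
    fix w assume w: "w \<in> W"
    have gU: "ge U w = ge A0 w + ge B0 w" using ge_Un[OF fA fB dAB] .
    have gW: "ge W w = ge C0 w + ge D0 w" using ge_Un[OF fC fD dCD] .
    show "ge U w + 1 = ge W w"
    proof (cases "w \<in> C0")
      case True
      define i where "i = ge C0 w"
      have i: "1 \<le> i" "i \<le> m + 1" "c i = w" using ge_re_inv[OF fC True] card i_def by auto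
      show ?thesis using gU gW G[OF i(1,2)] e2[OF i(1,2)] geDc[of i] geCc[of i] i card by simp
    next
      case False
      then have wD: "w \<in> D0" using w by simp
      define i where "i = ge D0 w"
      have i: "1 \<le> i" "i \<le> m + 1" "d i = w" using ge_re_inv[OF fD wD] card cD i_def by auto
      show ?thesis using gU gW H[of i] e1[OF i(1,2)] geDd[of i] geCd[of i] i card by simp
    qed
  qed
qed

lemma gt_anti: "finite X \<Longrightarrow> t \<le> s \<Longrightarrow> gt X s \<le> gt X t"
  unfolding gt_ge by (rule ge_anti) auto

lemma swap2_false:
  assumes card: "m' = m" and DZ': "D_Z' Z Z' = {Z}"
  and F3: "\<forall>w\<in>D0. gt A0 w = ge D0 w" and F4: "\<forall>w\<in>C0. gt B0 w + 1 = ge C0 w"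
  and x: "x \<in> A0" and y: "y \<in> B0" and sep: "\<forall>w\<in>W. (w < x \<longleftrightarrow> w < y)"
  shows False
proof -
  define L where "L = move Z {x, y}"
  have Leq: "L = (insert y (A0 - {x}), insert x (B0 - {y}))"
    unfolding L_def using move_swap[OF rZ x y] .
  have xB: "x \<notin> B0" and yA: "y \<notin> A0" using x y dAB by auto
  have fL1: "finite (fst L)" and fL2: "finite (snd L)" using Leq fA fB by auto
  have "card A0 > 0" using fA x card_gt_0_iff by blast
  then have cardA': "card (fst L) = card A0" using Leq fA x yA by (simp add: card_Diff_singleton)
  have "card B0 > 0" using fB y card_gt_0_iff by blast
  then have cardB': "card (snd L) = card B0" using Leq fB y xB by (simp add: card_Diff_singleton)
  have SL: "L \<in> Sbar Z" unfolding L_def using x y singles_reg[OF rZ] by (intro move_in_Sbar) auto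
  have defL: "defect L = 1" using cardA' cardB' cA by (simp add: defect_def)
  have gA: "gt (fst L) w = gt A0 w" if "w \<in> W" for w
    using gt_swap[OF fA x yA, of w] Leq sep that by (auto split: if_splits)
  have gB: "gt (snd L) w = gt B0 w" if "w \<in> W" for w
    using gt_swap[OF fB y xB, of w] Leq sep that by (auto split: if_splits)
  have P1: "\<forall>w\<in>snd Z'. gt (fst L) w = ge (snd Z') w" using F3 gA by auto
  have P2: "\<forall>w\<in>fst Z'. gt (snd L) w + 1 = ge (fst Z') w" using F4 gB by auto
  have fZ1: "finite (fst Z')" and fZ2: "finite (snd Z')" using fC fD by auto
  have "(L, Z') \<in> Bplus Z Z'"
    using Bplus_iff[OF fL1 fL2 fZ1 fZ2, of Z Z'] Sbar_self SL defL defZ' card P1 P2 by simp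
  then have "(L, Z') \<in> Dset Z Z'" using Z'_Sdef SL defL by (simp add: Dset_def Sdef_def)
  then have "L \<in> D_Z' Z Z'" by (simp add: D_Z'_def)
  then have "L = Z" using DZ' by simp
  then have "y \<in> A0" using Leq by (metis fst_conv insertI1)
  then show False using yA by simp
qed

lemma order2:
  assumes card: "m' = m" and DZ': "D_Z' Z Z' = {Z}"
  shows "\<forall>w\<in>W. gt U w = ge W w"
proof -
  have "(Z, Z') \<in> Bplus Z Z'" using BZZ'_of_DZ'[OF DZ'] .
  then have F3: "\<forall>w\<in>D0. gt A0 w = ge D0 w" and F4: "\<forall>w\<in>C0. gt B0 w + 1 = ge C0 w"
    using Bplus_iff[of Z Z' Z Z'] fA fB fC fD card by auto
  have e3: "gt A0 (d i) = i" if "1 \<le> i" "i \<le> m" for i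
    using F3 d_in[of i] geDd[of i] that card by simp
  have e4: "gt B0 (c i) + 1 = i" if "1 \<le> i" "i \<le> m" for i
    using F4 c_in[of i] geCc[of i] that card by simp
  have bc1: "gt A0 (c i) \<le> i" if i: "1 \<le> i" "i \<le> m" for i
    using gt_anti[OF fA, of "d i" "c i"] dc[of i] i card e3[OF i] by simp
  have bc2: "i \<le> gt A0 (c i) + 1" if i: "1 \<le> i" "i \<le> m" for i
  proof (cases "i = 1")
    case True then show ?thesis by simp
  next
    case False
    have "i - 1 \<le> gt B0 (c i)" using e4[OF i] by simp
    then have "c i < b (i - 1)" using gt_K[OF fB, of "i - 1" "c i"] False i by simp
    moreover have "b (i - 1) < a (i - 1)" using ba[of "i - 1"] False i by simp
    ultimately have "i - 1 \<le> gt A0 (c i)" using gt_K[OF fA, of "i - 1" "c i"] False i cA by simp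
    then show ?thesis by simp
  qed
  have bd1: "i \<le> gt B0 (d i) + 1" if i: "1 \<le> i" "i \<le> m" for i
    using gt_anti[OF fB, of "d i" "c i"] dc[of i] i card e4[OF i] by simp
  have bd2: "gt B0 (d i) \<le> i" if i: "1 \<le> i" "i \<le> m" for i
  proof (rule ccontr)
    assume "\<not> gt B0 (d i) \<le> i"
    then have "i + 1 \<le> gt B0 (d i)" by simp
    then have h: "i + 1 \<le> m" "d i < b (i + 1)" using gt_K[OF fB, of "i+1" "d i"] by auto
    then have "d i < a (i + 1)" using ba[of "i+1"] by simp
    then have "i + 1 \<le> gt A0 (d i)" using gt_K[OF fA, of "i + 1" "d i"] h cA by simp
    then show False using e3[OF i] by simp
  qed
  have cw: "\<exists>j. 1 \<le> j \<and> j \<le> m \<and> w = c j" if "w \<in> C0" for w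
    using ge_re_inv[OF fC that] card by metis
  have dw: "\<exists>j. 1 \<le> j \<and> j \<le> m \<and> w = d j" if "w \<in> D0" for w
    using ge_re_inv[OF fD that] card cD by metis
  have swA: "\<not> (gt A0 (c i) = i - 1 \<and> gt B0 (d i) = i)" if i: "1 \<le> i" "i \<le> m" for i
  proof
    assume h: "gt A0 (c i) = i - 1 \<and> gt B0 (d i) = i"
    have x: "a i \<in> A0" and y: "b i \<in> B0" using a_in b_in i by auto
    have lt: "b i < a i" using ba i by simp
    have sep: "\<forall>w\<in>W. (w < a i \<longleftrightarrow> w < b i)"
    proof
      fix w assume w: "w \<in> W"
      show "w < a i \<longleftrightarrow> w < b i"
      proof
        assume wa: "w < a i"
        then have iw: "i \<le> gt A0 w" using gt_K[OF fA, of i w] i cA by simp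
        show "w < b i"
        proof (cases "w \<in> C0")
          case True
          then obtain j where j: "1 \<le> j" "j \<le> m" "w = c j" using cw by blast
          show ?thesis
          proof (cases "j \<le> i")
            case True
            have "c i \<le> c j" using re_mono[OF fC, of j i] j True i card by simp
            then have "gt A0 w \<le> gt A0 (c i)" using gt_anti[OF fA] j by simp
            then show ?thesis using h iw i by simp
          next
            case False
            have "i \<le> gt B0 (c j)" using e4[OF j(1,2)] False by simp
            then show ?thesis using gt_K[OF fB, of i "c j"] i j by simp
          qed
        next
          case False
          then have "w \<in> D0" using w by simp
          then obtain j where j: "1 \<le> j" "j \<le> m" "w = d j" using dw by blast
          have "i \<le> j" using iw e3[OF j(1,2)] j by simp
          then have "d j \<le> d i" using re_mono[OF fD, of i j] j i cD card by simp
          moreover have "d i < b i" using gt_K[OF fB, of i "d i"] h i by simp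
          ultimately show ?thesis using j by simp
        qed
      next
        assume "w < b i" then show "w < a i" using lt by simp
      qed
    qed
    show False by (rule swap2_false[OF card DZ' F3 F4 x y sep])
  qed
  have swB: "\<not> (gt B0 (d i) = i - 1 \<and> (i < m \<longrightarrow> gt A0 (c (i+1)) = i + 1))" if i: "1 \<le> i" "i \<le> m" for i
  proof
    assume h: "gt B0 (d i) = i - 1 \<and> (i < m \<longrightarrow> gt A0 (c (i+1)) = i + 1)"
    have x: "a (i+1) \<in> A0" and y: "b i \<in> B0" using a_in b_in i by auto
    have lt: "a (i+1) < b i" using ab i by simp
    have sep: "\<forall>w\<in>W. (w < a (i+1) \<longleftrightarrow> w < b i)"
    proof
      fix w assume w: "w \<in> W"
      show "w < a (i+1) \<longleftrightarrow> w < b i"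
      proof
        assume "w < a (i+1)" then show "w < b i" using lt by simp
      next
        assume wb: "w < b i"
        then have iw: "i \<le> gt B0 w" using gt_K[OF fB, of i w] i by simp
        show "w < a (i+1)"
        proof (cases "w \<in> C0")
          case True
          then obtain j where j: "1 \<le> j" "j \<le> m" "w = c j" using cw by blast
          have ij: "i + 1 \<le> j" using iw e4[OF j(1,2)] j by simp
          then have im: "i < m" using j by simp
          have "c j \<le> c (i+1)" using re_mono[OF fC, of "i+1" j] j ij card by simp
          moreover have "c (i+1) < a (i+1)"
            using gt_K[OF fA, of "i+1" "c (i+1)"] h im cA by simp
          ultimately show ?thesis using j by simp
        next
          case False
          then have "w \<in> D0" using w by simp
          then obtain j where j: "1 \<le> j" "j \<le> m" "w = d j" using dw by blast
          show ?thesis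
          proof (cases "j \<le> i")
            case True
            have "d i \<le> d j" using re_mono[OF fD, of j i] j True i card cD by simp
            moreover have "\<not> d i < b i"
            proof -
              have e: "(i \<le> gt B0 (d i)) = (d i < b i)" using gt_K[OF fB, of i "d i"] i by simp
              have "\<not> i \<le> gt B0 (d i)" using h i by linarith
              then show ?thesis using e by simp
            qed
            ultimately show ?thesis using wb j by simp
          next
            case False
            have "i + 1 \<le> gt A0 (d j)" using e3[OF j(1,2)] False by simp
            then show ?thesis using gt_K[OF fA, of "i+1" "d j"] j by simp
          qed
        qed
      qed
    qed
    show False by (rule swap2_false[OF card DZ' F3 F4 x y sep])
  qed
  have H: "1 \<le> i \<longrightarrow> gt B0 (d i) = i" if i: "i \<le> m" for i
    using i
  proof (induction i rule: inc_induct)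
    case base
    show ?case using swB[of m] bd1[of m] bd2[of m] by fastforce
  next
    case (step n)
    show ?case
    proof
      assume n1: "1 \<le> n"
      have "gt B0 (d (Suc n)) = Suc n" using step by simp
      then have "gt A0 (c (Suc n)) = Suc n"
        using swA[of "Suc n"] bc1[of "Suc n"] bc2[of "Suc n"] step by fastforce
      then show "gt B0 (d n) = n"
        using swB[of n] bd1[of n] bd2[of n] step n1 by fastforce
    qed
  qed
  have G: "gt A0 (c i) = i" if i: "1 \<le> i" "i \<le> m" for i
    using swA[OF i] bc1[OF i] bc2[OF i] H[of i] i by fastforce
  show ?thesis
  proof
    fix w assume w: "w \<in> W"
    have gU: "gt U w = gt A0 w + gt B0 w" using gt_Un[OF fA fB dAB] .
    show "gt U w = ge W w"
    proof (cases "w \<in> C0")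
      case True
      then obtain i where i: "1 \<le> i" "i \<le> m" "w = c i" using cw by blast
      show ?thesis using gU G[OF i(1,2)] e4[OF i(1,2)] geWc[of i] i card by simp
    next
      case False
      then have "w \<in> D0" using w by simp
      then obtain i where i: "1 \<le> i" "i \<le> m" "w = d i" using dw by blast
      show ?thesis using gU H[of i] e3[OF i(1,2)] geWd[of i] i card by simp
    qed
  qed
qed

end

lemma ge_unique_aux:
  assumes "finite X" "finite Y" "x \<in> X" "x \<notin> Y" "\<forall>z. z \<in> X - Y \<or> z \<in> Y - X \<longrightarrow> z \<le> x"
  shows "ge X x = ge Y x + 1"
proof -
  have e1: "{z\<in>X. x \<le> z} = insert x {z\<in>X. x < z}" using assms(3) by auto
  have e2: "{z\<in>Y. x \<le> z} = {z\<in>Y. x < z}" using assms(4) by (auto simp: order_le_less)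
  have e3: "{z\<in>X. x < z} = {z\<in>Y. x < z}" using assms(5) by (auto simp: not_le[symmetric])
  have "x \<notin> {z\<in>Y. x < z}" by simp
  moreover have "finite {z\<in>Y. x < z}" using assms(2) by simp
  ultimately show ?thesis unfolding ge_def using e1 e2 e3 by simp
qed

lemma ge_unique:
  assumes "finite W" "X \<subseteq> W" "Y \<subseteq> W" "\<forall>w\<in>W. ge X w = ge Y w"
  shows "X = Y"
proof (rule ccontr)
  assume ne: "X \<noteq> Y"
  define S where "S = (X - Y) \<union> (Y - X)"
  have "S \<subseteq> W" using assms(2,3) S_def by auto
  then have fS: "finite S" using assms(1) finite_subset by auto
  have "S \<noteq> {}" using ne S_def by auto
  define x where "x = Max S"
  have xS: "x \<in> S" using fS \<open>S \<noteq> {}\<close> x_def by simp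
  have mx: "\<forall>z. z \<in> X - Y \<or> z \<in> Y - X \<longrightarrow> z \<le> x" using fS x_def S_def by auto
  have fX: "finite X" using assms(1,2) finite_subset by blast
  have fY: "finite Y" using assms(1,3) finite_subset by blast
  have xW: "x \<in> W" using xS S_def assms(2,3) by auto
  show False
  proof (cases "x \<in> X")
    case True
    then have "x \<notin> Y" using xS S_def by auto
    then have "ge X x = ge Y x + 1" using ge_unique_aux[OF fX fY True] mx by simp
    then show False using assms(4) xW by simp
  next
    case False
    then have "x \<in> Y" using xS S_def by auto
    then have "ge Y x = ge X x + 1" using ge_unique_aux[OF fY fX \<open>x \<in> Y\<close> False] mx by blast
    then show False using assms(4) xW by simp
  qed
qed

context sett begin

definition th :: "nat \<Rightarrow> nat" where "th u = row_entry W (ge U u + 1)"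

lemma main1:
  assumes card: "m' = m + 1" and O1: "\<forall>w\<in>W. ge U w + 1 = ge W w"
    and M: "M \<subseteq> singles Z" and L'S: "L' \<in> Sbar Z'"
  shows "(move Z M, L') \<in> Bplus Z Z' \<longleftrightarrow> L' = move Z' (theta1_img Z Z' M)"
proof -
  have cW: "card W = 2 * m + 2" using cardW card by simp
  have cU: "card U = 2 * m + 1" using cardU .
  have T1: "th u \<in> W \<and> ge W (th u) = ge U u + 1" if u: "u \<in> U" for u
  proof -
    have "ge U u \<le> 2 * m + 1" using ge_le_card[OF fU, of u] cU by simp
    then show ?thesis unfolding th_def using re_in[OF fW, of "ge U u + 1"] ge_re[OF fW, of "ge U u + 1"] cW by simp
  qed
  have T2: "w \<le> th u \<longleftrightarrow> w \<le> u" if u: "u \<in> U" and w: "w \<in> W" for u w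
  proof -
    have "w \<le> th u \<longleftrightarrow> ge W (th u) \<le> ge W w" using rank_ge_iff[OF fW] T1[OF u] by blast
    also have "\<dots> \<longleftrightarrow> ge U u \<le> ge U w"
    proof -
      have "ge W w = ge U w + 1" using O1 w by metis
      then show ?thesis using T1[OF u] by simp
    qed
    also have "\<dots> \<longleftrightarrow> w \<le> u" using rank_ge_iff[OF fU u] by simp
    finally show ?thesis .
  qed
  have T3: "inj_on th U"
  proof (rule inj_onI)
    fix u v assume u: "u \<in> U" and v: "v \<in> U" and e: "th u = th v"
    then have "ge U u = ge U v" using T1[OF u] T1[OF v] by simp
    then show "u = v" using rank_inj[OF fU u v] by simp
  qed
  have T4: "th (a i) = d i" if i: "1 \<le> i" "i \<le> m + 1" for i
  proof -
    have "ge W (d i) = ge U (a i) + 1" using geWd[of i] geUa[of i] i card by simp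
    then show ?thesis unfolding th_def using ge_re_inv(3)[OF fW, of "d i"] d_in[of i] i card by simp
  qed
  have T5: "th (b i) = c (i+1)" if i: "1 \<le> i" "i \<le> m" for i
  proof -
    have "ge W (c (i+1)) = ge U (b i) + 1" using geWc[of "i+1"] geUb[of i] i card by simp
    then show ?thesis unfolding th_def using ge_re_inv(3)[OF fW, of "c (i+1)"] c_in[of "i+1"] i card by simp
  qed
  have aw: "\<exists>i. 1 \<le> i \<and> i \<le> m + 1 \<and> u = a i" if "u \<in> A0" for u
    using ge_re_inv[OF fA that] cA by metis
  have bw: "\<exists>i. 1 \<le> i \<and> i \<le> m \<and> u = b i" if "u \<in> B0" for u
    using ge_re_inv[OF fB that] by metis
  have T6a: "th u \<in> D0" if "u \<in> A0" for u using aw[OF that] T4 d_in card by auto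
  have T6b: "th u \<in> C0" if "u \<in> B0" for u using bw[OF that] T5 c_in card by fastforce
  have c1: "c 1 \<in> C0" "ge W (c 1) = 1" using c_in[of 1] geWc[of 1] card by auto
  have T7: "\<exists>u\<in>U. th u = w" if w: "w \<in> W" "w \<noteq> c 1" for w
  proof -
    have g1: "1 \<le> ge W w" "ge W w \<le> card W" using ge_re_inv[OF fW w(1)] by auto
    have "ge W w \<noteq> 1" using rank_inj[OF fW w(1)] c1 w by auto
    then have g2: "2 \<le> ge W w" using g1 by simp
    define u where "u = row_entry U (ge W w - 1)"
    have uU: "u \<in> U" using re_in[OF fU, of "ge W w - 1"] g1 g2 cU cW u_def by simp
    have "ge U u = ge W w - 1" using ge_re[OF fU, of "ge W w - 1"] g1 g2 cU cW u_def by simp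
    then have "th u = row_entry W (ge W w)" unfolding th_def using g2 by simp
    then show ?thesis using uU ge_re_inv(3)[OF fW w(1)] by auto
  qed
  have T8: "th u \<noteq> c 1" if "u \<in> U" for u using T1[OF that] c1 ge_re_inv(1)[OF fU that] by auto
  have thimg: "theta1_img Z Z' M = th ` M"
  proof
    show "theta1_img Z Z' M \<subseteq> th ` M"
    proof
      fix x assume "x \<in> theta1_img Z Z' M"
      then consider (A) i where "1 \<le> i" "i \<le> m + 1" "a i \<in> M" "x = d i"
        | (B) i where "1 \<le> i" "i \<le> m" "b i \<in> M" "x = c (i+1)"
        unfolding theta1_img_def by auto
      then show "x \<in> th ` M"
      proof cases
        case A then show ?thesis using T4[of i] by (metis image_eqI)
      next
        case B then show ?thesis using T5[of i] by (metis image_eqI)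
      qed
    qed
    show "th ` M \<subseteq> theta1_img Z Z' M"
    proof
      fix x assume "x \<in> th ` M"
      then obtain u where u: "u \<in> M" "x = th u" by auto
      have "u \<in> U" using u M singles_reg[OF rZ] by auto
      then show "x \<in> theta1_img Z Z' M"
      proof
        assume "u \<in> A0"
        then obtain i where "1 \<le> i" "i \<le> m + 1" "u = a i" using aw by blast
        then show ?thesis unfolding theta1_img_def using u T4 by auto
      next
        assume "u \<in> B0"
        then obtain i where "1 \<le> i" "i \<le> m" "u = b i" using bw by blast
        then show ?thesis unfolding theta1_img_def using u T5 by auto
      qed
    qed
  qed
  define A where "A = fst (move Z M)"
  define B where "B = snd (move Z M)"
  obtain N where N: "N \<subseteq> singles Z'" "L' = move Z' N" using L'S by (auto simp: Sbar_def)
  define C where "C = fst L'"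
  define D where "D = snd L'"
  have AB: "A \<union> B = U" "A \<inter> B = {}" using move_union[of Z M] move_disj[OF rZ, of M] A_def B_def by auto
  have CD: "C \<union> D = W" "C \<inter> D = {}" using move_union[of Z' N] move_disj[OF rZ', of N] C_def D_def N by auto
  have "finite (A \<union> B)" using AB(1) fU by simp
  then have fAB: "finite A" "finite B" by auto
  have "finite (C \<union> D)" using CD(1) fW by simp
  then have fCD: "finite C" "finite D" by auto
  have SL: "move Z M \<in> Sbar Z" using move_in_Sbar[OF M] .
  have gU: "ge U w = ge A w + ge B w" for w using ge_Un[OF fAB AB(2)] AB(1) by simp
  have gW: "ge W w = ge C w + ge D w" for w using ge_Un[OF fCD CD(2)] CD(1) by simp
  have cardUAB: "card U = card A + card B" using card_Un_disjoint[OF fAB AB(2)] AB(1) by simp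
  have cardWCD: "card W = card C + card D" using card_Un_disjoint[OF fCD CD(2)] CD(1) by simp
  have AU: "A \<subseteq> U" using AB by auto
  have DW: "D \<subseteq> W" using CD by auto
  have tgt: "move Z' (th ` M) = (W - th ` A, th ` A)"
  proof -
    have s: "snd (move Z' (th ` M)) = th ` A"
    proof
      show "snd (move Z' (th ` M)) \<subseteq> th ` A"
      proof
        fix x assume x: "x \<in> snd (move Z' (th ` M))"
        then have xW: "x \<in> W" using move_union[of Z' "th ` M"] by blast
        have "x \<noteq> c 1"
        proof
          assume xc: "x = c 1"
          then have "c 1 \<in> D0 \<or> c 1 \<in> th ` M" using x by (auto simp: move_def)
          moreover have "c 1 \<notin> D0" using c1 dCD by auto
          moreover have "c 1 \<notin> th ` M"
          proof
            assume "c 1 \<in> th ` M"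
            then obtain u where "u \<in> M" "c 1 = th u" by blast
            moreover have "M \<subseteq> U" using M singles_reg[OF rZ] by simp
            ultimately show False using T8[of u] by auto
          qed
          ultimately show False by blast
        qed
        then obtain u where u: "u \<in> U" "th u = x" using T7 xW by blast
        have "u \<in> A"
        proof (cases "u \<in> A0")
          case True
          then have "x \<in> D0" using T6a u by auto
          then have "x \<notin> th ` M" using x dCD by (auto simp: move_def)
          then have "u \<notin> M" using u by auto
          then show ?thesis using True A_def by (simp add: move_def)
        next
          case False
          then have uB: "u \<in> B0" using u by simp
          then have "x \<in> C0" using T6b u by auto
          then have "x \<in> th ` M" using x dCD by (auto simp: move_def)
          then have "u \<in> M" using u T3 M singles_reg[OF rZ] by (auto dest: inj_onD)
          then show ?thesis using uB A_def by (simp add: move_def)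
        qed
        then show "x \<in> th ` A" using u by auto
      qed
    next
      show "th ` A \<subseteq> snd (move Z' (th ` M))"
      proof
        fix x assume "x \<in> th ` A"
        then obtain u where u: "u \<in> A" "x = th u" by auto
        have uU: "u \<in> U" using u AU by auto
        have Mu: "th u \<in> th ` M \<longleftrightarrow> u \<in> M"
          using T3 uU M singles_reg[OF rZ] by (auto dest: inj_onD)
        show "x \<in> snd (move Z' (th ` M))"
        proof (cases "u \<in> A0")
          case True
          then have "u \<notin> M" using u A_def dAB by (auto simp: move_def)
          then show ?thesis using T6a[OF True] u Mu by (simp add: move_def)
        next
          case False
          then have "u \<in> B0" "u \<in> M" using u A_def uU by (auto simp: move_def)
          then show ?thesis using T6b u Mu by (simp add: move_def)
        qed
      qed
    qed
    have "fst (move Z' (th ` M)) = W - snd (move Z' (th ` M))"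
      using move_union[of Z' "th ` M"] move_disj[OF rZ', of "th ` M"] by blast
    then show ?thesis using s by (metis prod.collapse)
  qed
  have L'eq: "L' = (C, D)" using C_def D_def by simp
  have tgt_iff: "L' = move Z' (theta1_img Z Z' M) \<longleftrightarrow> D = th ` A"
    using tgt thimg L'eq CD by auto
  have gimg: "ge (th ` A) w = ge A w" if w: "w \<in> W" for w
  proof -
    have "{x \<in> th ` A. w \<le> x} = th ` {u\<in>A. w \<le> u}" using T2 AU w by auto
    moreover have "inj_on th {u\<in>A. w \<le> u}" using T3 AU by (auto intro: inj_on_subset)
    ultimately show ?thesis unfolding ge_def by (simp add: card_image)
  qed
  have cimg: "card (th ` A) = card A" using T3 AU by (auto intro: card_image inj_on_subset)
  have fL: "finite (fst (move Z M))" "finite (snd (move Z M))" "finite (fst L')" "finite (snd L')"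
    using fAB fCD A_def B_def C_def D_def by auto
  have Bp: "(move Z M, L') \<in> Bplus Z Z' \<longleftrightarrow>
      defect L' = 1 - defect (move Z M) \<and> (\<forall>w\<in>D. ge A w = ge D w) \<and> (\<forall>w\<in>C. ge B w + 1 = ge C w)"
    using Bplus_iff[OF fL, of Z Z'] SL L'S card A_def B_def C_def D_def by auto
  have defe: "defect L' = 1 - defect (move Z M) \<longleftrightarrow> card D = card A"
  proof -
    have d1: "defect L' = int (card C) - int (card D)" using C_def D_def by (simp add: defect_def)
    have d2: "defect (move Z M) = int (card A) - int (card B)" using A_def B_def by (simp add: defect_def)
    have i1: "int (card A) + int (card B) = 2 * int m + 1" using cardUAB cU by linarith
    have i2: "int (card C) + int (card D) = 2 * int m + 2" using cardWCD cW by linarith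
    show ?thesis using d1 d2 i1 i2 by linarith
  qed
  show ?thesis
  proof
    assume "(move Z M, L') \<in> Bplus Z Z'"
    then have P: "\<forall>w\<in>D. ge A w = ge D w" "\<forall>w\<in>C. ge B w + 1 = ge C w" using Bp by auto
    have Q: "\<forall>w\<in>W. ge D w = ge (th ` A) w"
    proof
      fix w assume w: "w \<in> W"
      show "ge D w = ge (th ` A) w"
      proof (cases "w \<in> D")
        case True then show ?thesis using P gimg w by simp
      next
        case False
        then have wC: "w \<in> C" using w CD by auto
        have o: "ge U w + 1 = ge W w" using O1 w by blast
        have p: "ge B w + 1 = ge C w" using P(2) wC by blast
        have "ge (th ` A) w = ge A w" using gimg w by blast
        then show ?thesis using o p gU[of w] gW[of w] by linarith
      qed
    qed
    have "th ` A \<subseteq> W" using T1 AU by auto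
    then have "D = th ` A" using ge_unique[OF fW DW _ Q] by simp
    then show "L' = move Z' (theta1_img Z Z' M)" using tgt_iff by simp
  next
    assume "L' = move Z' (theta1_img Z Z' M)"
    then have DA: "D = th ` A" using tgt_iff by simp
    have P1: "\<forall>w\<in>D. ge A w = ge D w" using DA gimg DW by auto
    have P2: "\<forall>w\<in>C. ge B w + 1 = ge C w"
    proof
      fix w assume w: "w \<in> C"
      then have wW: "w \<in> W" using CD by auto
      have o: "ge U w + 1 = ge W w" using O1 wW by blast
      have "ge D w = ge A w" using DA gimg wW by simp
      then show "ge B w + 1 = ge C w" using o gU[of w] gW[of w] by linarith
    qed
    have "card D = card A" using DA cimg by simp
    then show "(move Z M, L') \<in> Bplus Z Z'" using Bp P1 P2 defe by simp
  qed
qed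

definition th2 :: "nat \<Rightarrow> nat" where "th2 w = row_entry U (ge W w + 1)"

lemma main2:
  assumes card: "m' = m" and O2: "\<forall>w\<in>W. gt U w = ge W w"
    and N: "N \<subseteq> singles Z'" and LS: "L \<in> Sbar Z"
  shows "(L, move Z' N) \<in> Bplus Z Z' \<longleftrightarrow> L = move Z (theta2_img Z Z' N)"
proof -
  have cW: "card W = 2 * m" using cardW card by simp
  have cU: "card U = 2 * m + 1" using cardU .
  have S1: "th2 w \<in> U \<and> ge U (th2 w) = ge W w + 1" if w: "w \<in> W" for w
  proof -
    have "ge W w \<le> 2 * m" using ge_le_card[OF fW, of w] cW by simp
    then show ?thesis unfolding th2_def using re_in[OF fU, of "ge W w + 1"] ge_re[OF fU, of "ge W w + 1"] cU by simp
  qed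
  have S2: "w < th2 v \<longleftrightarrow> w < v" if v: "v \<in> W" and w: "w \<in> W" for v w
  proof -
    have "w < th2 v \<longleftrightarrow> ge U (th2 v) \<le> gt U w" using rank_gt_iff[OF fU] S1[OF v] by blast
    also have "\<dots> \<longleftrightarrow> ge W v + 1 \<le> ge W w"
    proof -
      have "gt U w = ge W w" using O2 w by blast
      then show ?thesis using S1[OF v] by simp
    qed
    also have "\<dots> \<longleftrightarrow> \<not> (ge W w \<le> ge W v)" by linarith
    also have "\<dots> \<longleftrightarrow> \<not> (v \<le> w)" using rank_ge_iff[OF fW w, of v] by simp
    also have "\<dots> \<longleftrightarrow> w < v" by (rule not_le)
    finally show ?thesis .
  qed
  have S3: "inj_on th2 W"
  proof (rule inj_onI)
    fix u v assume u: "u \<in> W" and v: "v \<in> W" and e: "th2 u = th2 v"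
    then have "ge W u = ge W v" using S1[OF u] S1[OF v] by simp
    then show "u = v" using rank_inj[OF fW u v] by simp
  qed
  have S4c: "th2 (c i) = b i" if i: "1 \<le> i" "i \<le> m" for i
  proof -
    have "ge U (b i) = ge W (c i) + 1" using geWc[of i] geUb[of i] i card by simp
    then show ?thesis unfolding th2_def using ge_re_inv(3)[OF fU, of "b i"] b_in[of i] i by simp
  qed
  have S4d: "th2 (d i) = a (i+1)" if i: "1 \<le> i" "i \<le> m" for i
  proof -
    have "ge U (a (i+1)) = ge W (d i) + 1" using geWd[of i] geUa[of "i+1"] i card by simp
    then show ?thesis unfolding th2_def using ge_re_inv(3)[OF fU, of "a (i+1)"] a_in[of "i+1"] i by simp
  qed
  have cw: "\<exists>j. 1 \<le> j \<and> j \<le> m \<and> w = c j" if "w \<in> C0" for w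
    using ge_re_inv[OF fC that] card by metis
  have dw: "\<exists>j. 1 \<le> j \<and> j \<le> m \<and> w = d j" if "w \<in> D0" for w
    using ge_re_inv[OF fD that] card cD by metis
  have S5d: "th2 w \<in> A0" if "w \<in> D0" for w using dw[OF that] S4d a_in by fastforce
  have S5c: "th2 w \<in> B0" if "w \<in> C0" for w using cw[OF that] S4c b_in by fastforce
  have a1: "a 1 \<in> A0" "ge U (a 1) = 1" using a_in[of 1] geUa[of 1] by auto
  have S6: "\<exists>w\<in>W. th2 w = u" if u: "u \<in> U" "u \<noteq> a 1" for u
  proof -
    have g1: "1 \<le> ge U u" "ge U u \<le> card U" using ge_re_inv[OF fU u(1)] by auto
    have "ge U u \<noteq> 1" using rank_inj[OF fU u(1)] a1 u by auto
    then have g2: "2 \<le> ge U u" using g1 by simp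
    define w where "w = row_entry W (ge U u - 1)"
    have wW: "w \<in> W" using re_in[OF fW, of "ge U u - 1"] g1 g2 cU cW w_def by simp
    have "ge W w = ge U u - 1" using ge_re[OF fW, of "ge U u - 1"] g1 g2 cU cW w_def by simp
    then have "th2 w = row_entry U (ge U u)" unfolding th2_def using g2 by simp
    then show ?thesis using wW ge_re_inv(3)[OF fU u(1)] by auto
  qed
  have S7: "th2 w \<noteq> a 1" if "w \<in> W" for w using S1[OF that] a1 ge_re_inv(1)[OF fW that] by auto
  have S7': "a 1 \<notin> th2 ` X" if X: "X \<subseteq> W" for X
  proof
    assume "a 1 \<in> th2 ` X"
    then obtain w where "w \<in> X" "a 1 = th2 w" by blast
    then show False using S7[of w] X by auto
  qed
  have S8: "w < a 1" if w: "w \<in> W" for w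
  proof -
    have "gt U w = ge W w" using O2 w by blast
    then have "ge U (a 1) \<le> gt U w" using a1 ge_re_inv(1)[OF fW w] by simp
    then show ?thesis using rank_gt_iff[OF fU] a1 by blast
  qed
  have NW: "N \<subseteq> W" using N singles_reg[OF rZ'] by simp
  have thimg: "theta2_img Z Z' N = th2 ` N"
  proof
    show "theta2_img Z Z' N \<subseteq> th2 ` N"
    proof
      fix x assume "x \<in> theta2_img Z Z' N"
      then consider (C) i where "1 \<le> i" "i \<le> m" "c i \<in> N" "x = b i"
        | (D) i where "1 \<le> i" "i \<le> m" "d i \<in> N" "x = a (i+1)"
        unfolding theta2_img_def by auto
      then show "x \<in> th2 ` N"
      proof cases
        case C then show ?thesis using S4c[of i] by (metis image_eqI)
      next
        case D then show ?thesis using S4d[of i] by (metis image_eqI)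
      qed
    qed
    show "th2 ` N \<subseteq> theta2_img Z Z' N"
    proof
      fix x assume "x \<in> th2 ` N"
      then obtain w where w: "w \<in> N" "x = th2 w" by auto
      have "w \<in> W" using w NW by auto
      then show "x \<in> theta2_img Z Z' N"
      proof
        assume "w \<in> C0"
        then obtain i where "1 \<le> i" "i \<le> m" "w = c i" using cw by blast
        then show ?thesis unfolding theta2_img_def using w S4c by auto
      next
        assume "w \<in> D0"
        then obtain i where "1 \<le> i" "i \<le> m" "w = d i" using dw by blast
        then show ?thesis unfolding theta2_img_def using w S4d by auto
      qed
    qed
  qed
  obtain M where M: "M \<subseteq> singles Z" "L = move Z M" using LS by (auto simp: Sbar_def)
  define A where "A = fst L"
  define B where "B = snd L"
  define C where "C = fst (move Z' N)"
  define D where "D = snd (move Z' N)"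
  have AB: "A \<union> B = U" "A \<inter> B = {}" using move_union[of Z M] move_disj[OF rZ, of M] A_def B_def M by auto
  have CD: "C \<union> D = W" "C \<inter> D = {}" using move_union[of Z' N] move_disj[OF rZ', of N] C_def D_def by auto
  have "finite (A \<union> B)" using AB(1) fU by simp
  then have fAB: "finite A" "finite B" by auto
  have "finite (C \<union> D)" using CD(1) fW by simp
  then have fCD: "finite C" "finite D" by auto
  have SL': "move Z' N \<in> Sbar Z'" using move_in_Sbar[OF N] .
  have gU: "gt U w = gt A w + gt B w" for w using gt_Un[OF fAB AB(2)] AB(1) by simp
  have gW: "ge W w = ge C w + ge D w" for w using ge_Un[OF fCD CD(2)] CD(1) by simp
  have cardUAB: "card U = card A + card B" using card_Un_disjoint[OF fAB AB(2)] AB(1) by simp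
  have cardWCD: "card W = card C + card D" using card_Un_disjoint[OF fCD CD(2)] CD(1) by simp
  have AU: "A \<subseteq> U" using AB by auto
  have DW: "D \<subseteq> W" using CD by auto
  define As where "As = insert (a 1) (th2 ` D)"
  have AsU: "As \<subseteq> U" using As_def a1 S1 DW by auto
  have Dmem: "w \<in> D \<longleftrightarrow> (w \<in> D0 \<and> w \<notin> N) \<or> (w \<in> C0 \<and> w \<in> N)" for w
    using D_def by (auto simp: move_def)
  have thN: "th2 w \<in> th2 ` N \<longleftrightarrow> w \<in> N" if "w \<in> W" for w
    using S3 NW that by (auto dest: inj_onD)
  have tgt1: "fst (move Z (th2 ` N)) = As"
  proof
    show "fst (move Z (th2 ` N)) \<subseteq> As"
    proof
      fix x assume x: "x \<in> fst (move Z (th2 ` N))"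
      then have xU: "x \<in> U" using move_union[of Z "th2 ` N"] by blast
      show "x \<in> As"
      proof (cases "x = a 1")
        case True then show ?thesis using As_def by simp
      next
        case False
        then obtain w where w: "w \<in> W" "th2 w = x" using S6 xU by blast
        have "w \<in> D"
        proof (cases "w \<in> D0")
          case True
          then have "x \<in> A0" using S5d w by auto
          then have "x \<notin> th2 ` N" using x dAB by (auto simp: move_def)
          then show ?thesis using Dmem True thN w by auto
        next
          case False
          then have wC: "w \<in> C0" using w by simp
          then have "x \<in> B0" using S5c w by auto
          then have "x \<in> th2 ` N" using x dAB by (auto simp: move_def)
          then show ?thesis using Dmem wC thN w by auto
        qed
        then show ?thesis using w As_def by auto
      qed
    qed
  next
    show "As \<subseteq> fst (move Z (th2 ` N))"
    proof
      fix x assume x: "x \<in> As"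
      show "x \<in> fst (move Z (th2 ` N))"
      proof (cases "x = a 1")
        case True
        have "a 1 \<notin> th2 ` N"
        proof
          assume "a 1 \<in> th2 ` N"
          then obtain w where "w \<in> N" "a 1 = th2 w" by blast
          then show False using S7[of w] NW by auto
        qed
        then show ?thesis using True a1 by (simp add: move_def)
      next
        case False
        then obtain w where w: "w \<in> D" "x = th2 w" using x As_def by auto
        have wW: "w \<in> W" using w DW by auto
        show ?thesis
        proof (cases "w \<in> D0")
          case True
          then have "w \<notin> N" using Dmem w dCD by auto
          then show ?thesis using S5d[OF True] w thN[OF wW] by (simp add: move_def)
        next
          case False
          then have "w \<in> C0" "w \<in> N" using Dmem w by auto
          then show ?thesis using S5c w thN[OF wW] by (simp add: move_def)
        qed
      qed
    qed
  qed
  have tgt: "move Z (th2 ` N) = (As, U - As)"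
  proof -
    have "snd (move Z (th2 ` N)) = U - fst (move Z (th2 ` N))"
      using move_union[of Z "th2 ` N"] move_disj[OF rZ, of "th2 ` N"] by blast
    then show ?thesis using tgt1 by (metis prod.collapse)
  qed
  have Leq: "L = (A, B)" using A_def B_def by simp
  have tgt_iff: "L = move Z (theta2_img Z Z' N) \<longleftrightarrow> A = As"
    using tgt thimg Leq AB by auto
  have gimg: "gt As w = gt D w + 1" if w: "w \<in> W" for w
  proof -
    have "{x \<in> As. w < x} = insert (a 1) (th2 ` {v\<in>D. w < v})"
      using S2 DW w S8[OF w] As_def by auto
    moreover have "inj_on th2 {v\<in>D. w < v}" using S3 DW by (auto intro: inj_on_subset)
    moreover have "a 1 \<notin> th2 ` {v\<in>D. w < v}" using S7'[of "{v\<in>D. w < v}"] DW by auto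
    moreover have "finite {v\<in>D. w < v}" using fCD by simp
    ultimately show ?thesis unfolding gt_def by (simp add: card_image)
  qed
  have cimg: "card As = card D + 1"
  proof -
    have "card (th2 ` D) = card D" using S3 DW by (auto intro: card_image inj_on_subset)
    moreover have "a 1 \<notin> th2 ` D" using S7'[OF DW] .
    ultimately show ?thesis using As_def fCD by simp
  qed
  have fL: "finite (fst L)" "finite (snd L)" "finite (fst (move Z' N))" "finite (snd (move Z' N))"
    using fAB fCD A_def B_def C_def D_def by auto
  have Bp: "(L, move Z' N) \<in> Bplus Z Z' \<longleftrightarrow>
      defect (move Z' N) = 1 - defect L \<and> (\<forall>w\<in>D. gt A w = ge D w) \<and> (\<forall>w\<in>C. gt B w + 1 = ge C w)"
    using Bplus_iff[OF fL, of Z Z'] LS SL' card A_def B_def C_def D_def by auto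
  have defe: "defect (move Z' N) = 1 - defect L \<longleftrightarrow> card A = card D + 1"
  proof -
    have d1: "defect (move Z' N) = int (card C) - int (card D)" using C_def D_def by (simp add: defect_def)
    have d2: "defect L = int (card A) - int (card B)" using A_def B_def by (simp add: defect_def)
    have i1: "int (card A) + int (card B) = 2 * int m + 1" using cardUAB cU by linarith
    have i2: "int (card C) + int (card D) = 2 * int m" using cardWCD cW by linarith
    show ?thesis using d1 d2 i1 i2 by linarith
  qed
  have conv: "ge X u = ge As u" if X: "X \<subseteq> U" "card X = card As" "\<forall>w\<in>W. gt X w = gt As w" and u: "u \<in> U" for X u
  proof (cases "ge U u \<le> 2 * m")
    case True
    have g1: "1 \<le> ge U u" using ge_re_inv(1)[OF fU u] .
    define w where "w = row_entry W (ge U u)"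
    have wW: "w \<in> W" using re_in[OF fW, of "ge U u"] g1 True cW w_def by simp
    have gw: "ge W w = ge U u" using ge_re[OF fW, of "ge U u"] g1 True cW w_def by simp
    have gtw: "gt U w = ge U u" using O2 wW gw by simp
    have eq: "{x\<in>Y. u \<le> x} = {x\<in>Y. w < x}" if Y: "Y \<subseteq> U" for Y
    proof -
      have "u \<le> x \<longleftrightarrow> w < x" if x: "x \<in> U" for x
        using rank_ge_iff[OF fU x, of u] rank_gt_iff[OF fU x, of w] gtw by simp
      then show ?thesis using Y by auto
    qed
    have "ge X u = gt X w" unfolding ge_def gt_def using eq[OF X(1)] by simp
    also have "\<dots> = gt As w" using X(3) wW by blast
    also have "\<dots> = ge As u" unfolding ge_def gt_def using eq[OF AsU] by simp
    finally show ?thesis .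
  next
    case False
    have eq: "{x\<in>Y. u \<le> x} = Y" if Y: "Y \<subseteq> U" for Y
    proof -
      have "u \<le> x" if x: "x \<in> U" for x
        using rank_ge_iff[OF fU x, of u] ge_le_card[OF fU, of x] cU False by simp
      then show ?thesis using Y by auto
    qed
    show ?thesis unfolding ge_def using eq[OF X(1)] eq[OF AsU] X(2) by simp
  qed
  show ?thesis
  proof
    assume "(L, move Z' N) \<in> Bplus Z Z'"
    then have P: "\<forall>w\<in>D. gt A w = ge D w" "\<forall>w\<in>C. gt B w + 1 = ge C w" "card A = card D + 1"
      using Bp defe by auto
    have Q: "\<forall>w\<in>W. gt A w = gt As w"
    proof
      fix w assume w: "w \<in> W"
      have ga: "gt As w = gt D w + 1" using gimg w by blast
      show "gt A w = gt As w"
      proof (cases "w \<in> D")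
        case True
        then show ?thesis using P(1) ga ge_gt_in[OF fCD(2) True] by simp
      next
        case False
        then have wC: "w \<in> C" using w CD by auto
        have o: "gt U w = ge W w" using O2 w by blast
        have p: "gt B w + 1 = ge C w" using P(2) wC by blast
        have "ge D w = gt D w" using gt_notin[OF False] by simp
        then show ?thesis using o p ga gU[of w] gW[of w] by linarith
      qed
    qed
    have "\<forall>u\<in>U. ge A u = ge As u" using conv[OF AU _ Q] P(3) cimg by simp
    then have "A = As" using ge_unique[OF fU AU AsU] by simp
    then show "L = move Z (theta2_img Z Z' N)" using tgt_iff by simp
  next
    assume "L = move Z (theta2_img Z Z' N)"
    then have AA: "A = As" using tgt_iff by simp
    have P1: "\<forall>w\<in>D. gt A w = ge D w"
    proof
      fix w assume w: "w \<in> D"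
      then have "w \<in> W" using DW by auto
      then show "gt A w = ge D w" using AA gimg ge_gt_in[OF fCD(2) w] by simp
    qed
    have P2: "\<forall>w\<in>C. gt B w + 1 = ge C w"
    proof
      fix w assume w: "w \<in> C"
      then have wW: "w \<in> W" and wD: "w \<notin> D" using CD by auto
      have o: "gt U w = ge W w" using O2 wW by blast
      have "gt A w = gt D w + 1" using AA gimg wW by simp
      moreover have "ge D w = gt D w" using gt_notin[OF wD] by simp
      ultimately show "gt B w + 1 = ge C w" using o gU[of w] gW[of w] by linarith
    qed
    have "card A = card D + 1" using AA cimg by simp
    then show "(L, move Z' N) \<in> Bplus Z Z'" using Bp P1 P2 defe by simp
  qed
qed

end

theorem lemma0902:
  fixes Z Z' :: symbol
  assumes "special1 Z" and "special0 Z'"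
    and "card (fst Z') = card (snd Z) \<or> card (fst Z') = card (snd Z) + 1"
    and "regular Z" and "regular Z'"
    and "D_Z Z Z' = {Z'}" and "D_Z' Z Z' = {Z}"
  shows "(card (fst Z') = card (snd Z) + 1 \<longrightarrow>
           (\<forall>M. M \<subseteq> singles Z \<longrightarrow> (\<forall>L' \<in> Sbar Z'.
              (move Z M, L') \<in> Bplus Z Z' \<longleftrightarrow> L' = move Z' (theta1_img Z Z' M))))
       \<and> (card (fst Z') = card (snd Z) \<longrightarrow>
           (\<forall>N. N \<subseteq> singles Z' \<longrightarrow> (\<forall>L \<in> Sbar Z.
              (L, move Z' N) \<in> Bplus Z Z' \<longleftrightarrow> L = move Z (theta2_img Z Z' N))))"
proof -
  interpret sett Z Z' using assms(1,2,4,5) by unfold_locales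
  show ?thesis
  proof (intro conjI)
    show "card (fst Z') = card (snd Z) + 1 \<longrightarrow>
           (\<forall>M. M \<subseteq> singles Z \<longrightarrow> (\<forall>L' \<in> Sbar Z'.
              (move Z M, L') \<in> Bplus Z Z' \<longleftrightarrow> L' = move Z' (theta1_img Z Z' M)))"
    proof (intro impI allI ballI)
      fix M L' assume c: "card (fst Z') = card (snd Z) + 1" and M: "M \<subseteq> singles Z" and L': "L' \<in> Sbar Z'"
      show "(move Z M, L') \<in> Bplus Z Z' \<longleftrightarrow> L' = move Z' (theta1_img Z Z' M)"
        using main1[OF c order1[OF c assms(6)] M L'] .
    qed
    show "card (fst Z') = card (snd Z) \<longrightarrow>
           (\<forall>N. N \<subseteq> singles Z' \<longrightarrow> (\<forall>L \<in> Sbar Z.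
              (L, move Z' N) \<in> Bplus Z Z' \<longleftrightarrow> L = move Z (theta2_img Z Z' N)))"
    proof (intro impI allI ballI)
      fix N L assume c: "card (fst Z') = card (snd Z)" and N: "N \<subseteq> singles Z'" and L: "L \<in> Sbar Z"
      show "(L, move Z' N) \<in> Bplus Z Z' \<longleftrightarrow> L = move Z (theta2_img Z Z' N)"
        using main2[OF c order2[OF c assms(7)] N L] .
    qed
  qed
qed

end
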